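(* Let $\pi:\mathcal{B}(\ell^2)\to\mathcal{C}(\ell^2)$ be the natural quotient map onto the Calkin algebra, and let $P,Q\in\mathcal{B}(\ell^2)$ be orthogonal projections. Then $\pi(P)\le\pi(Q)$ if and only if $\mathrm{ran}(P)$ is essentially contained in $\mathrm{ran}(Q)$.
   Context: $\ell^2$ is the complex separable infinite-dimensional Hilbert space, $\mathcal{B}(\ell^2)$ the bounded operators, $\mathcal{K}(\ell^2)$ the compact operators, $\mathcal{C}(\ell^2)=\mathcal{B}(\ell^2)/\mathcal{K}(\ell^2)$ the Calkin algebra. For self-adjoint elements $a,b$ of a C*-algebra, $a\le b$ means $b-a$ is positive (i.e. $b-a=c^*c$ for some $c$ in the algebra). For closed subspaces $E,F$ of $\ell^2$, $E$ is essentially contained in $F$ if for every $\epsilon>0$ there is a closed subspace $E_0\subseteq E$ of finite codimension in $E$ such that every unit vector $v\in E_0$ satisfies $d(v,F)\le\epsilon$, where $d(v,F)$ is the distance from $v$ to $F$. *)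

theory Defs
  imports "HOL-Analysis.Analysis"
begin

text \<open>Operators are functions on
  nat => complex; only their behaviour on the carrier ell2 matters.\<close>

type_synonym vec = "nat \<Rightarrow> complex"

definition ell2 :: "vec set" where
  "ell2 = {x. summable (\<lambda>n. (cmod (x n))\<^sup>2)}"

definition l2inner :: "vec \<Rightarrow> vec \<Rightarrow> complex" where
  "l2inner x y = (\<Sum>n. cnj (x n) * y n)"

definition l2norm :: "vec \<Rightarrow> real" where
  "l2norm x = sqrt (\<Sum>n. (cmod (x n))\<^sup>2)"

definition vadd :: "vec \<Rightarrow> vec \<Rightarrow> vec" where
  "vadd x y = (\<lambda>n. x n + y n)"

definition vsub :: "vec \<Rightarrow> vec \<Rightarrow> vec" where
  "vsub x y = (\<lambda>n. x n - y n)"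

definition vscale :: "complex \<Rightarrow> vec \<Rightarrow> vec" where
  "vscale a x = (\<lambda>n. a * x n)"

definition bounded_op :: "(vec \<Rightarrow> vec) \<Rightarrow> bool" where
  "bounded_op T \<longleftrightarrow>
     (\<forall>x\<in>ell2. T x \<in> ell2) \<and>
     (\<forall>x\<in>ell2. \<forall>y\<in>ell2. \<forall>a b. T (vadd (vscale a x) (vscale b y)) = vadd (vscale a (T x)) (vscale b (T y))) \<and>
     (\<exists>K. \<forall>x\<in>ell2. l2norm (T x) \<le> K * l2norm x)"

definition compact_op :: "(vec \<Rightarrow> vec) \<Rightarrow> bool" where
  "compact_op T \<longleftrightarrow> bounded_op T \<and>
     (\<forall>xs::nat \<Rightarrow> vec. (\<forall>k. xs k \<in> ell2 \<and> l2norm (xs k) \<le> 1) \<longrightarrow>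
        (\<exists>r y. strict_mono r \<and> y \<in> ell2 \<and>
               (\<lambda>k. l2norm (vsub (T (xs (r k))) y)) \<longlonglongrightarrow> 0))"

definition adjoint_of :: "(vec \<Rightarrow> vec) \<Rightarrow> (vec \<Rightarrow> vec) \<Rightarrow> bool" where
  "adjoint_of S T \<longleftrightarrow> (\<forall>x\<in>ell2. \<forall>y\<in>ell2. l2inner (T x) y = l2inner x (S y))"

definition orth_proj :: "(vec \<Rightarrow> vec) \<Rightarrow> bool" where
  "orth_proj P \<longleftrightarrow> bounded_op P \<and> (\<forall>x\<in>ell2. P (P x) = P x) \<and> adjoint_of P P"

text \<open>Order in the Calkin algebra: pi(A) \<le> pi(B) iff pi(B) - pi(A) = c* c for some c
  in the Calkin algebra.  Since pi is surjective with pi(C)* = pi(C*), this says: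
  there is a bounded C (with adjoint Cs) such that B - A - C* C is compact.\<close>
definition calkin_le :: "(vec \<Rightarrow> vec) \<Rightarrow> (vec \<Rightarrow> vec) \<Rightarrow> bool" where
  "calkin_le A B \<longleftrightarrow> (\<exists>C Cs. bounded_op C \<and> bounded_op Cs \<and> adjoint_of Cs C \<and>
      compact_op (\<lambda>x. vsub (vsub (B x) (A x)) (Cs (C x))))"

definition closed_subspace :: "vec set \<Rightarrow> bool" where
  "closed_subspace E \<longleftrightarrow> E \<subseteq> ell2 \<and> (\<lambda>n. 0) \<in> E \<and>
     (\<forall>x\<in>E. \<forall>y\<in>E. \<forall>a b. vadd (vscale a x) (vscale b y) \<in> E) \<and>
     (\<forall>xs x. (\<forall>k. xs k \<in> E) \<and> x \<in> ell2 \<and> (\<lambda>k. l2norm (vsub (xs k) x)) \<longlonglongrightarrow> 0 \<longrightarrow> x \<in> E)"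

definition lspan :: "vec set \<Rightarrow> vec set" where
  "lspan S = {(\<lambda>n. \<Sum>s\<in>S. c s * s n) | c. True}"

definition fin_codim_in :: "vec set \<Rightarrow> vec set \<Rightarrow> bool" where
  "fin_codim_in E0 E \<longleftrightarrow> (\<exists>S. finite S \<and> S \<subseteq> E \<and>
      E = {vadd x y | x y. x \<in> E0 \<and> y \<in> lspan S})"

definition l2dist :: "vec \<Rightarrow> vec set \<Rightarrow> real" where
  "l2dist v F = Inf {l2norm (vsub v w) | w. w \<in> F}"

definition ess_contained :: "vec set \<Rightarrow> vec set \<Rightarrow> bool" where
  "ess_contained E F \<longleftrightarrow> (\<forall>\<epsilon>>0. \<exists>E0. closed_subspace E0 \<and> E0 \<subseteq> E \<and> fin_codim_in E0 E \<and>
      (\<forall>v\<in>E0. l2norm v = 1 \<longrightarrow> l2dist v F \<le> \<epsilon>))"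

end

theory Submission
  imports Defs "HOL-Library.Diagonal_Subsequence"
begin

definition nsq :: "vec \<Rightarrow> real" where "nsq x = (\<Sum>n. (cmod (x n))\<^sup>2)"

lemma l2norm_nsq: "l2norm x = sqrt (nsq x)" by (simp add: l2norm_def nsq_def)

lemma ell2_iff: "x \<in> ell2 \<longleftrightarrow> summable (\<lambda>n. (cmod (x n))\<^sup>2)" by (simp add: ell2_def)

lemma sq_ineq: "(p+q)\<^sup>2 \<le> 2*p\<^sup>2 + 2*(q::real)\<^sup>2"
proof -
  have "0 \<le> (p-q)\<^sup>2" by simp
  thus ?thesis by (simp add: power2_eq_square algebra_simps)
qed

lemma sq_ineq2: "p * q \<le> (p\<^sup>2 + (q::real)\<^sup>2) / 2"
proof -
  have "0 \<le> (p-q)\<^sup>2" by simp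
  thus ?thesis by (simp add: power2_eq_square algebra_simps)
qed

lemma sq_add_le: "(cmod (a + b))\<^sup>2 \<le> 2 * (cmod a)\<^sup>2 + 2 * (cmod b)\<^sup>2"
proof -
  have "cmod (a+b) \<le> cmod a + cmod b" by (rule norm_triangle_ineq)
  hence "(cmod (a + b))\<^sup>2 \<le> (cmod a + cmod b)\<^sup>2" by (simp add: power_mono)
  also have "\<dots> \<le> 2 * (cmod a)\<^sup>2 + 2 * (cmod b)\<^sup>2"
    using sq_ineq by blast
  finally show ?thesis .
qed

lemma ell2_add: "x \<in> ell2 \<Longrightarrow> y \<in> ell2 \<Longrightarrow> vadd x y \<in> ell2"
  unfolding ell2_iff vadd_def
  apply (rule summable_comparison_test[where g="\<lambda>n. 2 * (cmod (x n))\<^sup>2 + 2 * (cmod (y n))\<^sup>2"])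
  using sq_add_le by (auto intro!: summable_add summable_mult)

lemma ell2_scale: "x \<in> ell2 \<Longrightarrow> vscale a x \<in> ell2"
  unfolding ell2_iff vscale_def by (simp add: norm_mult power_mult_distrib summable_mult)

lemma ell2_sub: "x \<in> ell2 \<Longrightarrow> y \<in> ell2 \<Longrightarrow> vsub x y \<in> ell2"
proof -
  assume "x \<in> ell2" "y \<in> ell2"
  hence "vadd x (vscale (-1) y) \<in> ell2" by (simp add: ell2_add ell2_scale)
  moreover have "vadd x (vscale (-1) y) = vsub x y" by (auto simp: vadd_def vscale_def vsub_def)
  ultimately show ?thesis by simp
qed

lemma ell2_zero: "(\<lambda>n. 0) \<in> ell2" by (simp add: ell2_iff)

lemma prod_le_sq: "cmod a * cmod b \<le> ((cmod a)\<^sup>2 + (cmod b)\<^sup>2) / 2"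
  by (rule sq_ineq2)

lemma summable_prod: "x \<in> ell2 \<Longrightarrow> y \<in> ell2 \<Longrightarrow> summable (\<lambda>n. cmod (x n) * cmod (y n))"
  unfolding ell2_iff
  apply (rule summable_comparison_test[where g="\<lambda>n. ((cmod (x n))\<^sup>2 + (cmod (y n))\<^sup>2) / 2"])
  using prod_le_sq by (auto intro!: summable_add summable_divide)

lemma summable_inner: "x \<in> ell2 \<Longrightarrow> y \<in> ell2 \<Longrightarrow> summable (\<lambda>n. cnj (x n) * y n)"
  apply (rule summable_comparison_test[where g="\<lambda>n. cmod (x n) * cmod (y n)"])
  by (auto simp: summable_prod norm_mult)

lemma nsq_nonneg: "x \<in> ell2 \<Longrightarrow> nsq x \<ge> 0" unfolding nsq_def ell2_iff by (simp add: suminf_nonneg)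

lemma l2norm_sq: assumes "x \<in> ell2" shows "(l2norm x)\<^sup>2 = nsq x" using nsq_nonneg[OF assms] by (simp add: l2norm_nsq)
lemma l2norm_nonneg: "x \<in> ell2 \<Longrightarrow> l2norm x \<ge> 0" by (simp add: l2norm_nsq nsq_nonneg)

lemma nsq_zero_iff: "x \<in> ell2 \<Longrightarrow> nsq x = 0 \<longleftrightarrow> x = (\<lambda>n. 0)"
  unfolding nsq_def ell2_iff
  by (subst suminf_eq_zero_iff) (auto simp: fun_eq_iff)

lemma l2inner_self: "x \<in> ell2 \<Longrightarrow> l2inner x x = complex_of_real (nsq x)"
proof -
  assume x: "x \<in> ell2"
  have "l2inner x x = (\<Sum>n. complex_of_real ((cmod (x n))\<^sup>2))"
    unfolding l2inner_def by (metis complex_norm_square mult.commute)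
  also have "\<dots> = complex_of_real (nsq x)" unfolding nsq_def
    using x by (simp add: ell2_iff suminf_of_real)
  finally show ?thesis .
qed

lemma sum_prod_le: assumes "x \<in> ell2" "y \<in> ell2"
  shows "(\<Sum>n. cmod (x n) * cmod (y n)) \<le> l2norm x * l2norm y"
proof (cases "nsq x = 0 \<or> nsq y = 0")
  case True
  then have "x = (\<lambda>n. 0) \<or> y = (\<lambda>n. 0)" using nsq_zero_iff assms by blast
  then show ?thesis using assms by (auto simp: l2norm_nonneg)
next
  case False
  define A where "A = nsq x"
  define B where "B = nsq y"
  have A: "A > 0" "B > 0" using False nsq_nonneg[OF assms(1)] nsq_nonneg[OF assms(2)] A_def B_def by (auto simp: order_le_less)
  define t where "t = sqrt B / sqrt A"
  have t: "t > 0" using A by (simp add: t_def)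
  have pt: "cmod (x n) * cmod (y n) \<le> (t * (cmod (x n))\<^sup>2 + (cmod (y n))\<^sup>2 / t) / 2" for n
  proof -
    have "0 \<le> (t * cmod (x n) - cmod (y n))\<^sup>2 / t" using t by simp
    also have "(t * cmod (x n) - cmod (y n))\<^sup>2 / t = t * (cmod (x n))\<^sup>2 + (cmod (y n))\<^sup>2 / t - 2 * (cmod (x n) * cmod (y n))"
      using t by (simp add: power2_eq_square field_simps)
    finally show ?thesis by simp
  qed
  have "(\<Sum>n. cmod (x n) * cmod (y n)) \<le> (\<Sum>n. (t * (cmod (x n))\<^sup>2 + (cmod (y n))\<^sup>2 / t) / 2)"
    apply (rule suminf_le)
    subgoal for n using pt[of n] by simp
    subgoal using summable_prod[OF assms] .
    subgoal apply (rule summable_divide, rule summable_add) using assms unfolding ell2_iff by (auto intro: summable_mult summable_divide)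
    done
  also have "\<dots> = (t * A + B / t) / 2"
  proof -
    have s1: "summable (\<lambda>n. t * (cmod (x n))\<^sup>2)" using assms(1) unfolding ell2_iff by (rule summable_mult)
    have s2: "summable (\<lambda>n. (cmod (y n))\<^sup>2 / t)" using assms(2) unfolding ell2_iff by (rule summable_divide)
    have "(\<Sum>n. (t * (cmod (x n))\<^sup>2 + (cmod (y n))\<^sup>2 / t) / 2) = (\<Sum>n. (t * (cmod (x n))\<^sup>2 + (cmod (y n))\<^sup>2 / t)) / 2"
      by (rule suminf_divide) (rule summable_add[OF s1 s2])
    also have "(\<Sum>n. (t * (cmod (x n))\<^sup>2 + (cmod (y n))\<^sup>2 / t)) = (\<Sum>n. t * (cmod (x n))\<^sup>2) + (\<Sum>n. (cmod (y n))\<^sup>2 / t)"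
      by (rule suminf_add[OF s1 s2, symmetric])
    also have "\<dots> = t * A + B / t" unfolding A_def B_def nsq_def
      using assms unfolding ell2_iff by (simp add: suminf_mult suminf_divide)
    finally show ?thesis .
  qed
  also have "\<dots> = sqrt A * sqrt B" using A unfolding t_def
    by (simp add: field_simps)
  finally show ?thesis by (simp add: l2norm_nsq A_def B_def)
qed

lemma cauchy_schwarz: "x \<in> ell2 \<Longrightarrow> y \<in> ell2 \<Longrightarrow> cmod (l2inner x y) \<le> l2norm x * l2norm y"
proof -
  assume a: "x \<in> ell2" "y \<in> ell2"
  have "cmod (l2inner x y) \<le> (\<Sum>n. cmod (cnj (x n) * y n))"
    unfolding l2inner_def by (rule summable_norm) (use summable_prod[OF a] in \<open>simp add: norm_mult\<close>)
  also have "\<dots> = (\<Sum>n. cmod (x n) * cmod (y n))" by (simp add: norm_mult)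
  finally show ?thesis using sum_prod_le[OF a] by linarith
qed

lemma triangle: assumes "x \<in> ell2" "y \<in> ell2" shows "l2norm (vadd x y) \<le> l2norm x + l2norm y"
proof -
  have "nsq (vadd x y) \<le> (\<Sum>n. (cmod (x n))\<^sup>2 + 2 * (cmod (x n) * cmod (y n)) + (cmod (y n))\<^sup>2)"
    unfolding nsq_def vadd_def
    apply (rule suminf_le)
    subgoal for n using norm_triangle_ineq[of "x n" "y n"]
      using power_mono[OF norm_triangle_ineq[of "x n" "y n"] norm_ge_zero, of 2] by (simp add: power2_sum)
    using ell2_add[OF assms] apply (simp add: ell2_iff vadd_def)
    apply (rule summable_add, rule summable_add)
    using assms summable_prod[OF assms] unfolding ell2_iff by (auto intro: summable_mult)
  also have "\<dots> = nsq x + 2 * (\<Sum>n. cmod (x n) * cmod (y n)) + nsq y"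
  proof -
    have s1: "summable (\<lambda>n. (cmod (x n))\<^sup>2)" "summable (\<lambda>n. (cmod (y n))\<^sup>2)"
      using assms unfolding ell2_iff by auto
    have s2: "summable (\<lambda>n. 2 * (cmod (x n) * cmod (y n)))"
      using summable_prod[OF assms] by (rule summable_mult)
    show ?thesis unfolding nsq_def
      apply (subst suminf_add[symmetric])
        apply (rule summable_add[OF s1(1) s2])
       apply (rule s1(2))
      apply (subst suminf_add[symmetric], rule s1(1), rule s2)
      using summable_prod[OF assms] by (simp add: suminf_mult)
  qed
  also have "\<dots> \<le> (l2norm x + l2norm y)\<^sup>2"
    using sum_prod_le[OF assms] assms by (simp add: power2_sum l2norm_sq)
  finally have "(l2norm (vadd x y))\<^sup>2 \<le> (l2norm x + l2norm y)\<^sup>2" using ell2_add[OF assms] by (simp add: l2norm_sq)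
  thus ?thesis using l2norm_nonneg assms by (meson add_nonneg_nonneg power2_le_imp_le)
qed

lemma vec_simps: "vadd x y n = x n + y n" "vsub x y n = x n - y n" "vscale a x n = a * x n"
  by (simp_all add: vadd_def vsub_def vscale_def)

lemma inner_add_right: "x \<in> ell2 \<Longrightarrow> y \<in> ell2 \<Longrightarrow> z \<in> ell2 \<Longrightarrow>
  l2inner x (vadd y z) = l2inner x y + l2inner x z"
  unfolding l2inner_def vadd_def
  by (simp add: distrib_left suminf_add summable_inner)

lemma inner_add_left: "x \<in> ell2 \<Longrightarrow> y \<in> ell2 \<Longrightarrow> z \<in> ell2 \<Longrightarrow>
  l2inner (vadd x y) z = l2inner x z + l2inner y z"
  unfolding l2inner_def vadd_def
  by (simp add: distrib_right suminf_add summable_inner)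

lemma inner_sub_right: "x \<in> ell2 \<Longrightarrow> y \<in> ell2 \<Longrightarrow> z \<in> ell2 \<Longrightarrow>
  l2inner x (vsub y z) = l2inner x y - l2inner x z"
  unfolding l2inner_def vsub_def
  by (simp add: right_diff_distrib suminf_diff summable_inner)

lemma inner_sub_left: "x \<in> ell2 \<Longrightarrow> y \<in> ell2 \<Longrightarrow> z \<in> ell2 \<Longrightarrow>
  l2inner (vsub x y) z = l2inner x z - l2inner y z"
  unfolding l2inner_def vsub_def
  by (simp add: left_diff_distrib suminf_diff summable_inner)

lemma inner_scale_right: "x \<in> ell2 \<Longrightarrow> y \<in> ell2 \<Longrightarrow> l2inner x (vscale a y) = a * l2inner x y"
proof -
  assume a: "x \<in> ell2" "y \<in> ell2"
  have "l2inner x (vscale a y) = (\<Sum>n. a * (cnj (x n) * y n))"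
    unfolding l2inner_def vscale_def by (simp add: algebra_simps)
  also have "\<dots> = a * l2inner x y" unfolding l2inner_def
    by (rule suminf_mult[OF summable_inner[OF a]])
  finally show ?thesis .
qed

lemma inner_scale_left: "x \<in> ell2 \<Longrightarrow> y \<in> ell2 \<Longrightarrow> l2inner (vscale a x) y = cnj a * l2inner x y"
proof -
  assume a: "x \<in> ell2" "y \<in> ell2"
  have "l2inner (vscale a x) y = (\<Sum>n. cnj a * (cnj (x n) * y n))"
    unfolding l2inner_def vscale_def by (simp add: algebra_simps)
  also have "\<dots> = cnj a * l2inner x y" unfolding l2inner_def
    by (rule suminf_mult[OF summable_inner[OF a]])
  finally show ?thesis .
qed

lemma inner_commute: "x \<in> ell2 \<Longrightarrow> y \<in> ell2 \<Longrightarrow> l2inner y x = cnj (l2inner x y)"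
proof -
  assume a: "x \<in> ell2" "y \<in> ell2"
  have "cnj (l2inner x y) = (\<Sum>n. cnj (cnj (x n) * y n))"
    unfolding l2inner_def by (rule bounded_linear.suminf[OF bounded_linear_cnj summable_inner[OF a]])
  also have "\<dots> = l2inner y x" unfolding l2inner_def by (simp add: mult.commute)
  finally show ?thesis by simp
qed

lemma inner_zero_left: "l2inner (\<lambda>n. 0) y = 0" by (simp add: l2inner_def)
lemma inner_zero_right: "l2inner x (\<lambda>n. 0) = 0" by (simp add: l2inner_def)

lemma nsq_scale: "x \<in> ell2 \<Longrightarrow> nsq (vscale a x) = (cmod a)\<^sup>2 * nsq x"
  unfolding nsq_def vscale_def ell2_iff by (simp add: norm_mult power_mult_distrib suminf_mult)

lemma l2norm_scale: "x \<in> ell2 \<Longrightarrow> l2norm (vscale a x) = cmod a * l2norm x"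
  by (simp add: l2norm_nsq nsq_scale real_sqrt_mult)

lemma cmod_add_sq: "(cmod (a + b))\<^sup>2 = (cmod a)\<^sup>2 + (cmod b)\<^sup>2 + 2 * Re (cnj a * b)"
  unfolding cmod_power2 by (simp add: power2_eq_square algebra_simps)

lemma cmod_sub_sq: "(cmod (a - b))\<^sup>2 = (cmod a)\<^sup>2 + (cmod b)\<^sup>2 - 2 * Re (cnj a * b)"
  unfolding cmod_power2 by (simp add: power2_eq_square algebra_simps)

lemma summable_Re_inner: "x \<in> ell2 \<Longrightarrow> y \<in> ell2 \<Longrightarrow> summable (\<lambda>n. Re (cnj (x n) * y n))"
  by (rule summable_Re[OF summable_inner])

lemma Re_inner: "x \<in> ell2 \<Longrightarrow> y \<in> ell2 \<Longrightarrow> Re (l2inner x y) = (\<Sum>n. Re (cnj (x n) * y n))"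
  unfolding l2inner_def by (rule Re_suminf[OF summable_inner])

lemma nsq_add: assumes "x \<in> ell2" "y \<in> ell2"
  shows "nsq (vadd x y) = nsq x + nsq y + 2 * Re (l2inner x y)"
proof -
  have s: "summable (\<lambda>n. (cmod (x n))\<^sup>2)" "summable (\<lambda>n. (cmod (y n))\<^sup>2)"
    using assms by (auto simp: ell2_iff)
  have sr: "summable (\<lambda>n. Re (cnj (x n) * y n))" by (rule summable_Re_inner[OF assms])
  have "nsq (vadd x y) = (\<Sum>n. (cmod (x n))\<^sup>2 + (cmod (y n))\<^sup>2 + 2 * Re (cnj (x n) * y n))"
    unfolding nsq_def vadd_def by (simp add: cmod_add_sq)
  also have "\<dots> = (\<Sum>n. (cmod (x n))\<^sup>2 + (cmod (y n))\<^sup>2) + (\<Sum>n. 2 * Re (cnj (x n) * y n))"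
    by (rule suminf_add[OF summable_add[OF s] summable_mult[OF sr], symmetric])
  also have "(\<Sum>n. (cmod (x n))\<^sup>2 + (cmod (y n))\<^sup>2) = nsq x + nsq y"
    unfolding nsq_def by (rule suminf_add[OF s, symmetric])
  also have "(\<Sum>n. 2 * Re (cnj (x n) * y n)) = 2 * Re (l2inner x y)"
    unfolding Re_inner[OF assms] by (rule suminf_mult[OF sr])
  finally show ?thesis .
qed



lemma nsq_sub: assumes "x \<in> ell2" "y \<in> ell2"
  shows "nsq (vsub x y) = nsq x + nsq y - 2 * Re (l2inner x y)"
proof -
  have s: "summable (\<lambda>n. (cmod (x n))\<^sup>2)" "summable (\<lambda>n. (cmod (y n))\<^sup>2)"
    using assms by (auto simp: ell2_iff)
  have sr: "summable (\<lambda>n. Re (cnj (x n) * y n))" by (rule summable_Re_inner[OF assms])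
  have "nsq (vsub x y) = (\<Sum>n. (cmod (x n))\<^sup>2 + (cmod (y n))\<^sup>2 - 2 * Re (cnj (x n) * y n))"
    unfolding nsq_def vsub_def by (simp add: cmod_sub_sq)
  also have "\<dots> = (\<Sum>n. (cmod (x n))\<^sup>2 + (cmod (y n))\<^sup>2) - (\<Sum>n. 2 * Re (cnj (x n) * y n))"
    by (rule suminf_diff[OF summable_add[OF s] summable_mult[OF sr], symmetric])
  also have "(\<Sum>n. (cmod (x n))\<^sup>2 + (cmod (y n))\<^sup>2) = nsq x + nsq y"
    unfolding nsq_def by (rule suminf_add[OF s, symmetric])
  also have "(\<Sum>n. 2 * Re (cnj (x n) * y n)) = 2 * Re (l2inner x y)"
    unfolding Re_inner[OF assms] by (rule suminf_mult[OF sr])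
  finally show ?thesis .
qed



lemma pythag: "x \<in> ell2 \<Longrightarrow> y \<in> ell2 \<Longrightarrow> l2inner x y = 0 \<Longrightarrow> nsq (vadd x y) = nsq x + nsq y"
  by (simp add: nsq_add)

lemma vsub_swap: "vsub x y = vscale (-1) (vsub y x)" by (simp add: vsub_def vscale_def fun_eq_iff)

lemma l2norm_sub_sym: "x \<in> ell2 \<Longrightarrow> y \<in> ell2 \<Longrightarrow> l2norm (vsub x y) = l2norm (vsub y x)"
  by (subst vsub_swap) (simp add: l2norm_scale ell2_sub)

lemma triangle_sub: assumes "x \<in> ell2" "y \<in> ell2" "z \<in> ell2"
  shows "l2norm (vsub x z) \<le> l2norm (vsub x y) + l2norm (vsub y z)"
proof -
  have "vsub x z = vadd (vsub x y) (vsub y z)" by (simp add: vsub_def vadd_def fun_eq_iff)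
  thus ?thesis using triangle[of "vsub x y" "vsub y z"] assms by (simp add: ell2_sub)
qed

lemma coord_le: assumes "x \<in> ell2" shows "cmod (x n) \<le> l2norm x"
proof -
  have "(\<Sum>i\<in>{n}. (cmod (x i))\<^sup>2) \<le> nsq x" unfolding nsq_def
    by (rule sum_le_suminf) (use assms in \<open>auto simp: ell2_iff\<close>)
  hence "(cmod (x n))\<^sup>2 \<le> (l2norm x)\<^sup>2" using assms by (simp add: l2norm_sq)
  thus ?thesis using assms l2norm_nonneg by (meson power2_le_imp_le)
qed

lemma partial_le: assumes "x \<in> ell2" shows "(\<Sum>i<M. (cmod (x i))\<^sup>2) \<le> nsq x"
  unfolding nsq_def by (rule sum_le_suminf) (use assms in \<open>auto simp: ell2_iff\<close>)

definition lcauchy :: "(nat \<Rightarrow> vec) \<Rightarrow> bool" where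
  "lcauchy f \<longleftrightarrow> (\<forall>k. f k \<in> ell2) \<and> (\<forall>e>0. \<exists>N. \<forall>m\<ge>N. \<forall>n\<ge>N. l2norm (vsub (f m) (f n)) < e)"

lemma ell2_complete: assumes "lcauchy xs"
  shows "\<exists>y\<in>ell2. (\<lambda>k. l2norm (vsub (xs k) y)) \<longlonglongrightarrow> 0"
proof -
  have xs: "\<And>k. xs k \<in> ell2" using assms by (simp add: lcauchy_def)
  have C: "\<And>e. e > 0 \<Longrightarrow> \<exists>N. \<forall>m\<ge>N. \<forall>n\<ge>N. l2norm (vsub (xs m) (xs n)) < e"
    using assms by (simp add: lcauchy_def)
  have "Cauchy (\<lambda>k. xs k i)" for i
  proof (rule CauchyI)
    fix e :: real assume "e > 0"
    then obtain N where N: "\<forall>m\<ge>N. \<forall>n\<ge>N. l2norm (vsub (xs m) (xs n)) < e" using C by blast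
    show "\<exists>M. \<forall>m\<ge>M. \<forall>n\<ge>M. norm (xs m i - xs n i) < e"
    proof (intro exI allI impI)
      fix m n assume "N \<le> m" "N \<le> n"
      hence "l2norm (vsub (xs m) (xs n)) < e" using N by blast
      moreover have "cmod (vsub (xs m) (xs n) i) \<le> l2norm (vsub (xs m) (xs n))"
        by (rule coord_le) (simp add: xs ell2_sub)
      ultimately show "norm (xs m i - xs n i) < e" by (simp add: vsub_def)
    qed
  qed
  hence "\<forall>i. \<exists>l. (\<lambda>k. xs k i) \<longlonglongrightarrow> l" by (simp add: Cauchy_convergent_iff convergent_def)
  hence "\<exists>y. \<forall>i. (\<lambda>k. xs k i) \<longlonglongrightarrow> y i" by (rule choice)
  then obtain y where y: "\<And>i. (\<lambda>k. xs k i) \<longlonglongrightarrow> y i" by blast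
  have main: "\<forall>m\<ge>N. vsub (xs m) y \<in> ell2 \<and> l2norm (vsub (xs m) y) \<le> e"
    if N: "\<forall>m\<ge>N. \<forall>n\<ge>N. l2norm (vsub (xs m) (xs n)) < e" and e: "e > 0" for N e
  proof (intro allI impI)
    fix m assume m: "N \<le> m"
    have ps: "(\<Sum>i<M. (cmod (xs m i - y i))\<^sup>2) \<le> e\<^sup>2" for M
    proof -
      have lim: "(\<lambda>n. \<Sum>i<M. (cmod (xs m i - xs n i))\<^sup>2) \<longlonglongrightarrow> (\<Sum>i<M. (cmod (xs m i - y i))\<^sup>2)"
        by (intro tendsto_intros y)
      show ?thesis
      proof (rule LIMSEQ_le_const2[OF lim], intro exI allI impI)
        fix n assume n: "N \<le> n"
        have "(\<Sum>i<M. (cmod (xs m i - xs n i))\<^sup>2) \<le> nsq (vsub (xs m) (xs n))"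
          using partial_le[OF ell2_sub[OF xs xs], of m n M] by (simp add: vsub_def)
        also have "\<dots> = (l2norm (vsub (xs m) (xs n)))\<^sup>2" by (simp add: l2norm_sq xs ell2_sub)
        also have "\<dots> \<le> e\<^sup>2"
        proof -
          have lt: "l2norm (vsub (xs m) (xs n)) < e" using N m n by blast
          show ?thesis by (rule power_mono[OF less_imp_le[OF lt] l2norm_nonneg[OF ell2_sub[OF xs xs]]])
        qed
        finally show "(\<Sum>i<M. (cmod (xs m i - xs n i))\<^sup>2) \<le> e\<^sup>2" .
      qed
    qed
    have sm: "summable (\<lambda>i. (cmod (xs m i - y i))\<^sup>2)"
      by (rule summableI_nonneg_bounded[where x="e\<^sup>2"]) (use ps in auto)
    show "vsub (xs m) y \<in> ell2 \<and> l2norm (vsub (xs m) y) \<le> e"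
    proof
      show in2: "vsub (xs m) y \<in> ell2" using sm by (simp add: ell2_iff vsub_def)
      have "nsq (vsub (xs m) y) \<le> e\<^sup>2" unfolding nsq_def vsub_def
        by (rule suminf_le_const) (use sm ps in auto)
      hence "(l2norm (vsub (xs m) y))\<^sup>2 \<le> e\<^sup>2" using in2 by (simp add: l2norm_sq)
      thus "l2norm (vsub (xs m) y) \<le> e" by (rule power2_le_imp_le) (use e in auto)
    qed
  qed
  obtain N1 where N1: "\<forall>m\<ge>N1. \<forall>n\<ge>N1. l2norm (vsub (xs m) (xs n)) < 1" using C[of 1] by auto
  have "vsub (xs N1) y \<in> ell2" using main[OF N1] by simp
  moreover have "y = vsub (xs N1) (vsub (xs N1) y)" by (simp add: vsub_def)
  ultimately have yin: "y \<in> ell2" using ell2_sub xs by metis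
  have "(\<lambda>k. l2norm (vsub (xs k) y)) \<longlonglongrightarrow> 0"
  proof (rule LIMSEQ_I)
    fix r :: real assume r: "r > 0"
    then obtain N where N: "\<forall>m\<ge>N. \<forall>n\<ge>N. l2norm (vsub (xs m) (xs n)) < r/2" using C[of "r/2"] by auto
    have "\<forall>m\<ge>N. l2norm (vsub (xs m) y) \<le> r/2" using main[OF N] r by simp
    show "\<exists>no. \<forall>n\<ge>no. norm (l2norm (vsub (xs n) y) - 0) < r"
    proof (intro exI allI impI)
      fix n assume "N \<le> n"
      hence a: "l2norm (vsub (xs n) y) \<le> r/2" using \<open>\<forall>m\<ge>N. l2norm (vsub (xs m) y) \<le> r/2\<close> by blast
      have b: "0 \<le> l2norm (vsub (xs n) y)" using l2norm_nonneg ell2_sub xs yin by blast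
      show "norm (l2norm (vsub (xs n) y) - 0) < r" using a b r by simp
    qed
  qed
  thus ?thesis using yin by blast
qed

lemma lcauchy_subseq: assumes "lcauchy f" "strict_mono r" shows "lcauchy (f \<circ> r)"
  unfolding lcauchy_def
proof (intro conjI allI impI)
  show "(f \<circ> r) k \<in> ell2" for k using assms by (simp add: lcauchy_def)
  fix e :: real assume "e > 0"
  then obtain N where N: "\<forall>m\<ge>N. \<forall>n\<ge>N. l2norm (vsub (f m) (f n)) < e" using assms by (auto simp: lcauchy_def)
  show "\<exists>N. \<forall>m\<ge>N. \<forall>n\<ge>N. l2norm (vsub ((f \<circ> r) m) ((f \<circ> r) n)) < e"
  proof (intro exI allI impI)
    fix m n assume "N \<le> m" "N \<le> n"
    hence "N \<le> r m" "N \<le> r n" using seq_suble[OF assms(2)] le_trans by blast+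
    thus "l2norm (vsub ((f \<circ> r) m) ((f \<circ> r) n)) < e" using N by simp
  qed
qed

lemma conv_imp_lcauchy: assumes "\<forall>k. f k \<in> ell2" "y \<in> ell2" "(\<lambda>k. l2norm (vsub (f k) y)) \<longlonglongrightarrow> 0"
  shows "lcauchy f"
  unfolding lcauchy_def
proof (intro conjI allI impI)
  fix e :: real assume e: "e > 0"
  obtain N where N: "\<forall>k\<ge>N. norm (l2norm (vsub (f k) y) - 0) < e/2"
    using LIMSEQ_D[OF assms(3), of "e/2"] e by auto
  show "\<exists>N. \<forall>m\<ge>N. \<forall>n\<ge>N. l2norm (vsub (f m) (f n)) < e"
  proof (intro exI allI impI)
    fix m n assume "N \<le> m" "N \<le> n"
    hence "l2norm (vsub (f m) y) < e/2" "l2norm (vsub (f n) y) < e/2" using N by auto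
    moreover have "l2norm (vsub (f m) (f n)) \<le> l2norm (vsub (f m) y) + l2norm (vsub y (f n))"
      using triangle_sub assms by blast
    moreover have "l2norm (vsub y (f n)) = l2norm (vsub (f n) y)" using l2norm_sub_sym assms by blast
    ultimately show "l2norm (vsub (f m) (f n)) < e" by linarith
  qed
qed (use assms in auto)

lemma l2norm_sub_le: "x \<in> ell2 \<Longrightarrow> y \<in> ell2 \<Longrightarrow> l2norm (vsub x y) \<le> l2norm x + l2norm y"
proof -
  assume a: "x \<in> ell2" "y \<in> ell2"
  have "vsub x y = vadd x (vscale (-1) y)" by (simp add: vsub_def vadd_def vscale_def fun_eq_iff)
  moreover have "l2norm (vadd x (vscale (-1) y)) \<le> l2norm x + cmod (-1) * l2norm y"
    using triangle[OF a(1) ell2_scale[OF a(2)], of "-1"] a by (simp add: l2norm_scale)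
  ultimately show ?thesis by simp
qed

lemma l2norm_zero[simp]: "l2norm (\<lambda>n. 0) = 0" by (simp add: l2norm_nsq nsq_def)

lemma vsub_self[simp]: "vsub x x = (\<lambda>n. 0)" by (simp add: vsub_def)

lemma lcauchy_const: "x \<in> ell2 \<Longrightarrow> lcauchy (\<lambda>k. x)"
  unfolding lcauchy_def by auto

lemma lcauchy_cong: assumes "lcauchy f" "\<And>k. g k = f k" shows "lcauchy g"
proof -
  have "g = f" using assms(2) by (rule ext)
  thus ?thesis using assms(1) by simp
qed

lemma lcauchy_scale: assumes "lcauchy f" shows "lcauchy (\<lambda>k. vscale c (f k))"
  unfolding lcauchy_def
proof (intro conjI allI impI)
  have f: "\<And>k. f k \<in> ell2" using assms by (simp add: lcauchy_def)
  show "vscale c (f k) \<in> ell2" for k using f by (simp add: ell2_scale)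
  fix e :: real assume e: "e > 0"
  obtain N where N: "\<forall>m\<ge>N. \<forall>n\<ge>N. l2norm (vsub (f m) (f n)) < e / (cmod c + 1)"
  proof -
    have "e / (cmod c + 1) > 0" using e norm_ge_zero[of c] by (intro divide_pos_pos) linarith+
    thus ?thesis using assms that unfolding lcauchy_def by blast
  qed
  show "\<exists>N. \<forall>m\<ge>N. \<forall>n\<ge>N. l2norm (vsub (vscale c (f m)) (vscale c (f n))) < e"
  proof (intro exI allI impI)
    fix m n assume mn: "N \<le> m" "N \<le> n"
    have eq: "vsub (vscale c (f m)) (vscale c (f n)) = vscale c (vsub (f m) (f n))"
      by (simp add: vsub_def vscale_def fun_eq_iff algebra_simps)
    have "l2norm (vsub (vscale c (f m)) (vscale c (f n))) = cmod c * l2norm (vsub (f m) (f n))"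
      unfolding eq by (rule l2norm_scale) (simp add: f ell2_sub)
    also have "\<dots> \<le> (cmod c + 1) * l2norm (vsub (f m) (f n))"
      by (rule mult_right_mono) (auto simp: l2norm_nonneg f ell2_sub)
    also have "\<dots> < (cmod c + 1) * (e / (cmod c + 1))"
      using N mn by (intro mult_strict_left_mono) (auto simp: add_nonneg_pos)
    also have "\<dots> = e"
    proof -
      have "cmod c + 1 \<noteq> 0" using norm_ge_zero[of c] by linarith
      thus ?thesis by simp
    qed
    finally show "l2norm (vsub (vscale c (f m)) (vscale c (f n))) < e" .
  qed
qed

lemma lcauchy_add: assumes "lcauchy f" "lcauchy g" shows "lcauchy (\<lambda>k. vadd (f k) (g k))"
  unfolding lcauchy_def
proof (intro conjI allI impI)
  have f: "\<And>k. f k \<in> ell2" and g: "\<And>k. g k \<in> ell2" using assms by (simp_all add: lcauchy_def)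
  show "vadd (f k) (g k) \<in> ell2" for k using f g by (simp add: ell2_add)
  fix e :: real assume e: "e > 0"
  obtain N1 where N1: "\<forall>m\<ge>N1. \<forall>n\<ge>N1. l2norm (vsub (f m) (f n)) < e/2"
    using assms(1) e unfolding lcauchy_def by (meson half_gt_zero)
  obtain N2 where N2: "\<forall>m\<ge>N2. \<forall>n\<ge>N2. l2norm (vsub (g m) (g n)) < e/2"
    using assms(2) e unfolding lcauchy_def by (meson half_gt_zero)
  show "\<exists>N. \<forall>m\<ge>N. \<forall>n\<ge>N. l2norm (vsub (vadd (f m) (g m)) (vadd (f n) (g n))) < e"
  proof (intro exI[of _ "max N1 N2"] allI impI)
    fix m n assume mn: "max N1 N2 \<le> m" "max N1 N2 \<le> n"
    have eq: "vsub (vadd (f m) (g m)) (vadd (f n) (g n)) = vadd (vsub (f m) (f n)) (vsub (g m) (g n))"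
      by (simp add: vsub_def vadd_def fun_eq_iff algebra_simps)
    have "l2norm (vsub (vadd (f m) (g m)) (vadd (f n) (g n))) \<le> l2norm (vsub (f m) (f n)) + l2norm (vsub (g m) (g n))"
      unfolding eq by (rule triangle) (simp_all add: f g ell2_sub)
    also have "\<dots> < e/2 + e/2" using N1 N2 mn by (intro add_strict_mono) auto
    finally show "l2norm (vsub (vadd (f m) (g m)) (vadd (f n) (g n))) < e" by simp
  qed
qed

lemma lcauchy_sub: assumes "lcauchy f" "lcauchy g" shows "lcauchy (\<lambda>k. vsub (f k) (g k))"
proof -
  have "lcauchy (\<lambda>k. vadd (f k) (vscale (-1) (g k)))" using assms by (intro lcauchy_add lcauchy_scale)
  moreover have "vadd (f k) (vscale (-1) (g k)) = vsub (f k) (g k)" for k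
    by (simp add: vsub_def vadd_def vscale_def fun_eq_iff)
  ultimately show ?thesis by simp
qed

definition lin :: "(vec \<Rightarrow> vec) \<Rightarrow> bool" where
  "lin T \<longleftrightarrow> (\<forall>x\<in>ell2. T x \<in> ell2) \<and>
     (\<forall>x\<in>ell2. \<forall>y\<in>ell2. \<forall>a b. T (vadd (vscale a x) (vscale b y)) = vadd (vscale a (T x)) (vscale b (T y)))"

lemma bounded_lin: "bounded_op T \<Longrightarrow> lin T" unfolding bounded_op_def lin_def by (elim conjE) (intro conjI)

lemma bounded_in: "bounded_op T \<Longrightarrow> x \<in> ell2 \<Longrightarrow> T x \<in> ell2" unfolding bounded_op_def by blast

lemma lin_in: "lin T \<Longrightarrow> x \<in> ell2 \<Longrightarrow> T x \<in> ell2" by (simp add: lin_def)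

lemma lin_comb: "lin T \<Longrightarrow> x \<in> ell2 \<Longrightarrow> y \<in> ell2 \<Longrightarrow> T (vadd (vscale a x) (vscale b y)) = vadd (vscale a (T x)) (vscale b (T y))"
  by (simp add: lin_def)

lemma lin_add: assumes "lin T" "x \<in> ell2" "y \<in> ell2" shows "T (vadd x y) = vadd (T x) (T y)"
  using lin_comb[OF assms, of 1 1] by (simp add: vscale_def)

lemma lin_scale: assumes "lin T" "x \<in> ell2" shows "T (vscale a x) = vscale a (T x)"
proof -
  have "T (vadd (vscale a x) (vscale 0 x)) = vadd (vscale a (T x)) (vscale 0 (T x))"
    using lin_comb[OF assms assms(2)] .
  moreover have "vadd (vscale a x) (vscale 0 x) = vscale a x" "vadd (vscale a (T x)) (vscale 0 (T x)) = vscale a (T x)"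
    by (simp_all add: vadd_def vscale_def)
  ultimately show ?thesis by simp
qed

lemma lin_sub: assumes "lin T" "x \<in> ell2" "y \<in> ell2" shows "T (vsub x y) = vsub (T x) (T y)"
proof -
  have "T (vadd (vscale 1 x) (vscale (-1) y)) = vadd (vscale 1 (T x)) (vscale (-1) (T y))"
    using lin_comb[OF assms] .
  moreover have "\<And>u v. vadd (vscale 1 u) (vscale (-1) v) = vsub u v"
    by (simp add: vadd_def vscale_def vsub_def fun_eq_iff)
  ultimately show ?thesis by simp
qed

lemma lin_zero: assumes "lin T" shows "T (\<lambda>n. 0) = (\<lambda>n. 0)"
  using lin_sub[OF assms ell2_zero ell2_zero] by simp

lemma lin_compose: "lin A \<Longrightarrow> lin B \<Longrightarrow> lin (\<lambda>x. A (B x))"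
  unfolding lin_def by (simp add: ell2_scale)

lemma lin_diff: assumes "lin A" "lin B" shows "lin (\<lambda>x. vsub (A x) (B x))"
  unfolding lin_def
proof (intro conjI ballI allI)
  show "vsub (A x) (B x) \<in> ell2" if "x \<in> ell2" for x using that assms by (simp add: lin_in ell2_sub)
  fix x y a b assume xy: "x \<in> ell2" "y \<in> ell2"
  show "vsub (A (vadd (vscale a x) (vscale b y))) (B (vadd (vscale a x) (vscale b y))) =
        vadd (vscale a (vsub (A x) (B x))) (vscale b (vsub (A y) (B y)))"
    using lin_comb[OF assms(1) xy] lin_comb[OF assms(2) xy]
    by (simp add: vsub_def vadd_def vscale_def fun_eq_iff algebra_simps)
qed

lemma bounded_bound: assumes "bounded_op T" shows "\<exists>K>0. \<forall>x\<in>ell2. l2norm (T x) \<le> K * l2norm x"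
proof -
  obtain K where K: "\<forall>x\<in>ell2. l2norm (T x) \<le> K * l2norm x" using assms unfolding bounded_op_def by (elim conjE exE)
  have "\<forall>x\<in>ell2. l2norm (T x) \<le> max K 1 * l2norm x"
  proof
    fix x assume x: "x \<in> ell2"
    have "l2norm (T x) \<le> K * l2norm x" using K x by blast
    also have "\<dots> \<le> max K 1 * l2norm x" by (rule mult_right_mono) (auto simp: l2norm_nonneg x)
    finally show "l2norm (T x) \<le> max K 1 * l2norm x" .
  qed
  thus ?thesis by (intro exI[of _ "max K 1"]) auto
qed

lemma bounded_intro: "lin T \<Longrightarrow> (\<forall>x\<in>ell2. l2norm (T x) \<le> K * l2norm x) \<Longrightarrow> bounded_op T"
  unfolding bounded_op_def lin_def by blast

lemma bounded_compose: assumes "bounded_op A" "bounded_op B" shows "bounded_op (\<lambda>x. A (B x))"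
proof -
  obtain K1 where K1: "K1 > 0" "\<forall>x\<in>ell2. l2norm (A x) \<le> K1 * l2norm x" using bounded_bound[OF assms(1)] by blast
  obtain K2 where K2: "K2 > 0" "\<forall>x\<in>ell2. l2norm (B x) \<le> K2 * l2norm x" using bounded_bound[OF assms(2)] by blast
  have "\<forall>x\<in>ell2. l2norm (A (B x)) \<le> (K1 * K2) * l2norm x"
  proof
    fix x assume x: "x \<in> ell2"
    have Bx: "B x \<in> ell2" using assms(2) x by (rule bounded_in)
    have "l2norm (A (B x)) \<le> K1 * l2norm (B x)" using K1 Bx by blast
    also have "\<dots> \<le> K1 * (K2 * l2norm x)" using K1 K2 x by (intro mult_left_mono) auto
    finally show "l2norm (A (B x)) \<le> (K1 * K2) * l2norm x" by (simp add: mult.assoc)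
  qed
  thus ?thesis by (rule bounded_intro[OF lin_compose[OF bounded_lin[OF assms(1)] bounded_lin[OF assms(2)]]])
qed

lemma bounded_diff: assumes "bounded_op A" "bounded_op B" shows "bounded_op (\<lambda>x. vsub (A x) (B x))"
proof -
  obtain K1 where K1: "K1 > 0" "\<forall>x\<in>ell2. l2norm (A x) \<le> K1 * l2norm x" using bounded_bound[OF assms(1)] by blast
  obtain K2 where K2: "K2 > 0" "\<forall>x\<in>ell2. l2norm (B x) \<le> K2 * l2norm x" using bounded_bound[OF assms(2)] by blast
  have "\<forall>x\<in>ell2. l2norm (vsub (A x) (B x)) \<le> (K1 + K2) * l2norm x"
  proof
    fix x assume x: "x \<in> ell2"
    have "l2norm (vsub (A x) (B x)) \<le> l2norm (A x) + l2norm (B x)"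
      by (rule l2norm_sub_le[OF bounded_in[OF assms(1) x] bounded_in[OF assms(2) x]])
    also have "\<dots> \<le> K1 * l2norm x + K2 * l2norm x" using K1 K2 x by (intro add_mono) auto
    finally show "l2norm (vsub (A x) (B x)) \<le> (K1 + K2) * l2norm x" by (simp add: distrib_right)
  qed
  thus ?thesis by (rule bounded_intro[OF lin_diff[OF bounded_lin[OF assms(1)] bounded_lin[OF assms(2)]]])
qed

definition pcM :: "(vec \<Rightarrow> vec) \<Rightarrow> bool" where
  "pcM T \<longleftrightarrow> (\<forall>(xs::nat \<Rightarrow> vec) M. (\<forall>k. xs k \<in> ell2 \<and> l2norm (xs k) \<le> M) \<longrightarrow> (\<exists>r. strict_mono r \<and> lcauchy (\<lambda>k. T (xs (r k)))))"

definition pc1 :: "(vec \<Rightarrow> vec) \<Rightarrow> bool" where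
  "pc1 T \<longleftrightarrow> (\<forall>xs::nat \<Rightarrow> vec. (\<forall>k. xs k \<in> ell2 \<and> l2norm (xs k) \<le> 1) \<longrightarrow> (\<exists>r. strict_mono r \<and> lcauchy (\<lambda>k. T (xs (r k)))))"

lemma pcM_D: fixes xs :: "nat \<Rightarrow> vec" assumes "pcM T" "\<forall>k. xs k \<in> ell2 \<and> l2norm (xs k) \<le> M" shows "\<exists>r. strict_mono r \<and> lcauchy (\<lambda>k. T (xs (r k)))"
  by (rule assms(1)[unfolded pcM_def, THEN spec[of _ xs], THEN spec[of _ M], THEN mp, OF assms(2)])

lemma pc1_D: fixes xs :: "nat \<Rightarrow> vec" assumes "pc1 T" "\<forall>k. xs k \<in> ell2 \<and> l2norm (xs k) \<le> 1" shows "\<exists>r. strict_mono r \<and> lcauchy (\<lambda>k. T (xs (r k)))"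
  by (rule assms(1)[unfolded pc1_def, THEN spec[of _ xs], THEN mp, OF assms(2)])

lemma pc1_pcM: assumes "lin T" "pc1 T" shows "pcM T"
  unfolding pcM_def
proof (intro allI impI)
  fix xs :: "nat \<Rightarrow> vec" and M assume xs: "\<forall>k. xs k \<in> ell2 \<and> l2norm (xs k) \<le> M"
  define M' where "M' = max M 1"
  have M': "M' > 0" "M \<le> M'" by (auto simp: M'_def)
  define ys where "ys k = vscale (complex_of_real (1 / M')) (xs k)" for k
  have "\<forall>k. ys k \<in> ell2 \<and> l2norm (ys k) \<le> 1"
  proof
    fix k
    have "l2norm (ys k) = (1 / M') * l2norm (xs k)" unfolding ys_def using xs M'
      by (simp add: l2norm_scale norm_divide)
    also have "\<dots> \<le> (1 / M') * M'"
    proof -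
      have "l2norm (xs k) \<le> M'" using xs M'(2) order_trans by blast
      thus ?thesis using M' by (intro mult_left_mono) auto
    qed
    finally show "ys k \<in> ell2 \<and> l2norm (ys k) \<le> 1" using M' xs by (simp add: ys_def ell2_scale)
  qed
  from pc1_D[OF assms(2) this] obtain r where
    r: "strict_mono r" "lcauchy (\<lambda>k. T (ys (r k)))" by blast
  have "T (xs k) = vscale (complex_of_real M') (T (ys k))" for k
  proof -
    have eq: "xs k = vscale (complex_of_real M') (ys k)" unfolding ys_def using M'
      by (simp add: vscale_def fun_eq_iff)
    have yk: "ys k \<in> ell2" unfolding ys_def using xs by (simp add: ell2_scale)
    have "T (vscale (complex_of_real M') (ys k)) = vscale (complex_of_real M') (T (ys k))"
      by (rule lin_scale[OF assms(1) yk])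
    thus ?thesis using eq by simp
  qed
  hence "lcauchy (\<lambda>k. T (xs (r k)))" using lcauchy_scale[OF r(2), of "complex_of_real M'"] by simp
  thus "\<exists>r. strict_mono r \<and> lcauchy (\<lambda>k. T (xs (r k)))" using r(1) by blast
qed

lemma compact_iff_pc: assumes "bounded_op T" shows "compact_op T \<longleftrightarrow> pcM T"
proof
  assume c: "compact_op T"
  have "pc1 T" unfolding pc1_def
  proof (intro allI impI)
    fix xs :: "nat \<Rightarrow> vec" assume xs: "\<forall>k. xs k \<in> ell2 \<and> l2norm (xs k) \<le> 1"
    have "\<exists>r y. strict_mono r \<and> y \<in> ell2 \<and> (\<lambda>k. l2norm (vsub (T (xs (r k))) y)) \<longlonglongrightarrow> 0"
      using c xs unfolding compact_op_def by (elim conjE allE[of _ xs]) (rule mp)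
    then obtain r y where ry: "strict_mono r" "y \<in> ell2" "(\<lambda>k. l2norm (vsub (T (xs (r k))) y)) \<longlonglongrightarrow> 0"
      by blast
    have "lcauchy (\<lambda>k. T (xs (r k)))"
      using ry xs bounded_in[OF assms] by (intro conv_imp_lcauchy) auto
    thus "\<exists>r. strict_mono r \<and> lcauchy (\<lambda>k. T (xs (r k)))" using ry by blast
  qed
  thus "pcM T" by (rule pc1_pcM[OF bounded_lin[OF assms]])
next
  assume p: "pcM T"
  show "compact_op T" unfolding compact_op_def
  proof (intro conjI allI impI)
    fix xs :: "nat \<Rightarrow> vec" assume xs: "\<forall>k. xs k \<in> ell2 \<and> l2norm (xs k) \<le> 1"
    from pcM_D[OF p xs] obtain r where r: "strict_mono r" "lcauchy (\<lambda>k. T (xs (r k)))" by blast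
    then obtain y where "y \<in> ell2" "(\<lambda>k. l2norm (vsub (T (xs (r k))) y)) \<longlonglongrightarrow> 0"
      using ell2_complete by blast
    thus "\<exists>r y. strict_mono r \<and> y \<in> ell2 \<and> (\<lambda>k. l2norm (vsub (T (xs (r k))) y)) \<longlonglongrightarrow> 0"
      using r by blast
  qed (rule assms)
qed

lemma pcM_compose_bounded: assumes "pcM A" "bounded_op B" shows "pcM (\<lambda>x. A (B x))"
  unfolding pcM_def
proof (intro allI impI)
  fix xs :: "nat \<Rightarrow> vec" and M assume xs: "\<forall>k. xs k \<in> ell2 \<and> l2norm (xs k) \<le> M"
  obtain K where K: "K > 0" "\<forall>x\<in>ell2. l2norm (B x) \<le> K * l2norm x" using bounded_bound[OF assms(2)] by blast
  have "\<forall>k. B (xs k) \<in> ell2 \<and> l2norm (B (xs k)) \<le> K * M"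
  proof
    fix k
    have "l2norm (B (xs k)) \<le> K * l2norm (xs k)" using K xs by blast
    also have "\<dots> \<le> K * M" using K xs by (intro mult_left_mono) auto
    finally show "B (xs k) \<in> ell2 \<and> l2norm (B (xs k)) \<le> K * M" using bounded_in[OF assms(2)] xs by blast
  qed
  from pcM_D[OF assms(1) this]
  show "\<exists>r. strict_mono r \<and> lcauchy (\<lambda>k. A (B (xs (r k))))" .
qed

lemma pcM_diff: assumes "pcM A" "pcM B" shows "pcM (\<lambda>x. vsub (A x) (B x))"
  unfolding pcM_def
proof (intro allI impI)
  fix xs :: "nat \<Rightarrow> vec" and M assume xs: "\<forall>k. xs k \<in> ell2 \<and> l2norm (xs k) \<le> M"
  then obtain r1 where r1: "strict_mono r1" "lcauchy (\<lambda>k. A (xs (r1 k)))" using pcM_D[OF assms(1)] by blast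
  have "\<forall>k. (xs \<circ> r1) k \<in> ell2 \<and> l2norm ((xs \<circ> r1) k) \<le> M" using xs by simp
  then obtain r2 where r2: "strict_mono r2" "lcauchy (\<lambda>k. B ((xs \<circ> r1) (r2 k)))" using pcM_D[OF assms(2)] by blast
  have "lcauchy ((\<lambda>k. A (xs (r1 k))) \<circ> r2)" by (rule lcauchy_subseq[OF r1(2) r2(1)])
  hence "lcauchy (\<lambda>k. vsub (A (xs (r1 (r2 k)))) (B (xs (r1 (r2 k)))))"
    using lcauchy_sub r2(2) by (simp add: comp_def)
  moreover have "strict_mono (r1 \<circ> r2)" using r1 r2 by (simp add: strict_mono_o)
  ultimately show "\<exists>r. strict_mono r \<and> lcauchy (\<lambda>k. vsub (A (xs (r k))) (B (xs (r k))))"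
    by (intro exI[of _ "r1 \<circ> r2"]) simp
qed

lemma pcM_cong: assumes "pcM A" "\<And>x. x \<in> ell2 \<Longrightarrow> B x = A x" shows "pcM B"
  unfolding pcM_def
proof (intro allI impI)
  fix xs :: "nat \<Rightarrow> vec" and M assume xs: "\<forall>k. xs k \<in> ell2 \<and> l2norm (xs k) \<le> M"
  from pcM_D[OF assms(1) this] obtain r where
    r: "strict_mono r" "lcauchy (\<lambda>k. A (xs (r k)))" by blast
  have "B (xs (r k)) = A (xs (r k))" for k using assms(2) xs by blast
  hence "lcauchy (\<lambda>k. B (xs (r k)))" using r(2) lcauchy_cong[of "\<lambda>k. A (xs (r k))" "\<lambda>k. B (xs (r k))"] by blast
  thus "\<exists>r. strict_mono r \<and> lcauchy (\<lambda>k. B (xs (r k)))" using r(1) by blast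
qed

lemma pcM_neg: assumes "pcM A" "lin A" shows "pcM (\<lambda>x. vscale (-1) (A x))"
  unfolding pcM_def
proof (intro allI impI)
  fix xs :: "nat \<Rightarrow> vec" and M assume xs: "\<forall>k. xs k \<in> ell2 \<and> l2norm (xs k) \<le> M"
  then obtain r where r: "strict_mono r" "lcauchy (\<lambda>k. A (xs (r k)))" using pcM_D[OF assms(1)] by blast
  thus "\<exists>r. strict_mono r \<and> lcauchy (\<lambda>k. vscale (-1) (A (xs (r k))))" using lcauchy_scale by blast
qed

lemma op_bounded: "orth_proj P \<Longrightarrow> bounded_op P" by (simp add: orth_proj_def)
lemma op_lin: "orth_proj P \<Longrightarrow> lin P" by (simp add: orth_proj_def bounded_lin)
lemma op_in: "orth_proj P \<Longrightarrow> x \<in> ell2 \<Longrightarrow> P x \<in> ell2" by (simp add: op_lin lin_in)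
lemma op_idem: "orth_proj P \<Longrightarrow> x \<in> ell2 \<Longrightarrow> P (P x) = P x" by (simp add: orth_proj_def)
lemma op_sa: "orth_proj P \<Longrightarrow> x \<in> ell2 \<Longrightarrow> y \<in> ell2 \<Longrightarrow> l2inner (P x) y = l2inner x (P y)"
  by (simp add: orth_proj_def adjoint_of_def)

lemma op_orth2: assumes P: "orth_proj P" and x: "x \<in> ell2" and y: "y \<in> ell2"
  shows "l2inner (P y) (vsub x (P x)) = 0"
proof -
  have "l2inner (P y) (vsub x (P x)) = l2inner y (P (vsub x (P x)))"
    by (rule op_sa[OF P y ell2_sub[OF x op_in[OF P x]]])
  also have "P (vsub x (P x)) = vsub (P x) (P (P x))" by (rule lin_sub[OF op_lin[OF P] x op_in[OF P x]])
  also have "\<dots> = (\<lambda>n. 0)" using op_idem[OF P x] by simp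
  finally show ?thesis by (simp add: inner_zero_right)
qed

lemma op_orth: "orth_proj P \<Longrightarrow> x \<in> ell2 \<Longrightarrow> l2inner (P x) (vsub x (P x)) = 0"
  by (rule op_orth2)

lemma vadd_vsub_cancel: "vadd y (vsub x y) = x" by (simp add: vadd_def vsub_def)

lemma op_pyth: assumes P: "orth_proj P" and x: "x \<in> ell2"
  shows "nsq x = nsq (P x) + nsq (vsub x (P x))"
proof -
  have "nsq (vadd (P x) (vsub x (P x))) = nsq (P x) + nsq (vsub x (P x))"
    by (rule pythag[OF op_in[OF P x] ell2_sub[OF x op_in[OF P x]] op_orth[OF P x]])
  thus ?thesis by (simp add: vadd_vsub_cancel)
qed

lemma op_norm_le: assumes P: "orth_proj P" and x: "x \<in> ell2" shows "l2norm (P x) \<le> l2norm x"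
proof -
  have "nsq (P x) \<le> nsq x" using op_pyth[OF P x] nsq_nonneg[OF ell2_sub[OF x op_in[OF P x]]] by linarith
  thus ?thesis by (simp add: l2norm_nsq)
qed

lemma op_norm_le2: assumes P: "orth_proj P" and x: "x \<in> ell2" shows "l2norm (vsub x (P x)) \<le> l2norm x"
proof -
  have "nsq (vsub x (P x)) \<le> nsq x" using op_pyth[OF P x] nsq_nonneg[OF op_in[OF P x]] by linarith
  thus ?thesis by (simp add: l2norm_nsq)
qed

lemma op_ran: assumes P: "orth_proj P" shows "y \<in> P ` ell2 \<longleftrightarrow> y \<in> ell2 \<and> P y = y"
proof
  assume "y \<in> P ` ell2"
  then obtain x where x: "x \<in> ell2" "y = P x" by blast
  thus "y \<in> ell2 \<and> P y = y" using op_in[OF P] op_idem[OF P] by simp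
next
  assume "y \<in> ell2 \<and> P y = y"
  thus "y \<in> P ` ell2" by (metis image_eqI)
qed

definition cp :: "(vec \<Rightarrow> vec) \<Rightarrow> vec \<Rightarrow> vec" where "cp Q x = vsub x (Q x)"

lemma lin_id: "lin (\<lambda>x. x)" by (simp add: lin_def)

lemma cp_in: "orth_proj Q \<Longrightarrow> x \<in> ell2 \<Longrightarrow> cp Q x \<in> ell2" by (simp add: cp_def ell2_sub op_in)

lemma cp_lin: assumes Q: "orth_proj Q" shows "lin (cp Q)"
proof -
  have "lin (\<lambda>x. vsub x (Q x))" by (rule lin_diff[OF lin_id op_lin[OF Q]])
  thus ?thesis by (simp add: cp_def[abs_def])
qed

lemma Q_cp: assumes Q: "orth_proj Q" and x: "x \<in> ell2" shows "Q (cp Q x) = (\<lambda>n. 0)"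
  unfolding cp_def using lin_sub[OF op_lin[OF Q] x op_in[OF Q x]] op_idem[OF Q x] by simp

lemma cp_orth_proj: assumes Q: "orth_proj Q" shows "orth_proj (cp Q)"
  unfolding orth_proj_def
proof (intro conjI ballI)
  have "\<forall>x\<in>ell2. l2norm (cp Q x) \<le> 1 * l2norm x" using op_norm_le2[OF Q] by (simp add: cp_def)
  thus "bounded_op (cp Q)" by (rule bounded_intro[OF cp_lin[OF Q]])
  fix x assume x: "x \<in> ell2"
  show "cp Q (cp Q x) = cp Q x" using Q_cp[OF Q x] by (simp add: cp_def vsub_def)
next
  show "adjoint_of (cp Q) (cp Q)" unfolding adjoint_of_def
  proof (intro ballI)
    fix x y assume x: "x \<in> ell2" and y: "y \<in> ell2"
    have "l2inner (cp Q x) y = l2inner x y - l2inner (Q x) y"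
      unfolding cp_def by (rule inner_sub_left[OF x op_in[OF Q x] y])
    also have "\<dots> = l2inner x y - l2inner x (Q y)" using op_sa[OF Q x y] by simp
    also have "\<dots> = l2inner x (cp Q y)"
      unfolding cp_def by (rule inner_sub_right[OF x y op_in[OF Q y], symmetric])
    finally show "l2inner (cp Q x) y = l2inner x (cp Q y)" .
  qed
qed

lemma l2dist_eq: assumes Q: "orth_proj Q" and v: "v \<in> ell2"
  shows "l2dist v (Q ` ell2) = l2norm (cp Q v)"
proof -
  define S where "S = {l2norm (vsub v w) | w. w \<in> Q ` ell2}"
  have mem: "l2norm (cp Q v) \<in> S" unfolding S_def cp_def using v by blast
  have low: "\<forall>s\<in>S. l2norm (cp Q v) \<le> s"
  proof
    fix s assume "s \<in> S"
    then obtain u where u: "u \<in> ell2" "s = l2norm (vsub v (Q u))" unfolding S_def by blast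
    have Qu: "Q u \<in> ell2" by (rule op_in[OF Q u(1)])
    have Qv: "Q v \<in> ell2" by (rule op_in[OF Q v])
    have eq: "vsub v (Q u) = vadd (cp Q v) (Q (vsub v u))"
      using lin_sub[OF op_lin[OF Q] v u(1)] by (simp add: cp_def vsub_def vadd_def fun_eq_iff)
    have orth: "l2inner (cp Q v) (Q (vsub v u)) = 0"
    proof -
      have "l2inner (cp Q v) (Q (vsub v u)) = cnj (l2inner (Q (vsub v u)) (cp Q v))"
        by (rule inner_commute[OF op_in[OF Q ell2_sub[OF v u(1)]] cp_in[OF Q v]])
      also have "l2inner (Q (vsub v u)) (cp Q v) = 0" unfolding cp_def
        by (rule op_orth2[OF Q v ell2_sub[OF v u(1)]])
      finally show ?thesis by simp
    qed
    have "nsq (vsub v (Q u)) = nsq (cp Q v) + nsq (Q (vsub v u))"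
      unfolding eq by (rule pythag[OF cp_in[OF Q v] op_in[OF Q ell2_sub[OF v u(1)]] orth])
    hence "nsq (cp Q v) \<le> nsq (vsub v (Q u))" using nsq_nonneg[OF op_in[OF Q ell2_sub[OF v u(1)]]] by linarith
    thus "l2norm (cp Q v) \<le> s" using u by (simp add: l2norm_nsq)
  qed
  have bdd: "bdd_below S" unfolding S_def bdd_below_def
    by (intro exI[of _ 0]) (auto intro!: l2norm_nonneg ell2_sub v op_in[OF Q])
  have "Inf S \<le> l2norm (cp Q v)" by (rule cInf_lower[OF mem bdd])
  moreover have "l2norm (cp Q v) \<le> Inf S" using mem low by (intro cInf_greatest) auto
  ultimately show ?thesis unfolding l2dist_def S_def by simp
qed

lemma cs_sub_ell2: "closed_subspace E \<Longrightarrow> x \<in> E \<Longrightarrow> x \<in> ell2" by (auto simp: closed_subspace_def)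
lemma cs_zero: "closed_subspace E \<Longrightarrow> (\<lambda>n. 0) \<in> E" by (simp add: closed_subspace_def)
lemma cs_comb: "closed_subspace E \<Longrightarrow> x \<in> E \<Longrightarrow> y \<in> E \<Longrightarrow> vadd (vscale a x) (vscale b y) \<in> E"
  by (simp add: closed_subspace_def)
lemma cs_add: assumes "closed_subspace E" "x \<in> E" "y \<in> E" shows "vadd x y \<in> E"
  using cs_comb[OF assms, of 1 1] by (simp add: vscale_def)
lemma cs_scale: assumes "closed_subspace E" "x \<in> E" shows "vscale a x \<in> E"
proof -
  have "vadd (vscale a x) (vscale 0 x) \<in> E" by (rule cs_comb[OF assms assms(2)])
  thus ?thesis by (simp add: vadd_def vscale_def)
qed
lemma cs_closed: "closed_subspace E \<Longrightarrow> (\<forall>k. xs k \<in> E) \<Longrightarrow> x \<in> ell2 \<Longrightarrow> (\<lambda>k. l2norm (vsub (xs k) x)) \<longlonglongrightarrow> 0 \<Longrightarrow> x \<in> E"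
  unfolding closed_subspace_def by blast

lemma parallelogram: assumes "a \<in> ell2" "b \<in> ell2"
  shows "nsq (vadd a b) + nsq (vsub a b) = 2 * nsq a + 2 * nsq b"
  using nsq_add[OF assms] nsq_sub[OF assms] by simp

lemma proj_exists: assumes E: "closed_subspace E" and x: "x \<in> ell2"
  shows "\<exists>p\<in>E. \<forall>e\<in>E. l2inner e (vsub x p) = 0"
proof -
  have Eell: "\<And>e. e \<in> E \<Longrightarrow> e \<in> ell2" using cs_sub_ell2[OF E] .
  define D where "D = {nsq (vsub x e) | e. e \<in> E}"
  define d where "d = Inf D"
  have Dne: "D \<noteq> {}" unfolding D_def using cs_zero[OF E] by blast
  have nn: "\<And>e. e \<in> E \<Longrightarrow> 0 \<le> nsq (vsub x e)" using nsq_nonneg ell2_sub[OF x] Eell by blast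
  have bdd: "bdd_below D" unfolding D_def bdd_below_def
    using nn by (intro exI[of _ 0]) auto
  have dle: "d \<le> nsq (vsub x e)" if "e \<in> E" for e
    unfolding d_def by (rule cInf_lower[OF _ bdd]) (use that in \<open>auto simp: D_def\<close>)
  have d0: "0 \<le> d" using dle[OF cs_zero[OF E]] dle cs_zero[OF E] unfolding d_def
    by (intro cInf_greatest[OF Dne]) (auto simp: D_def nn)
  have "\<forall>k. \<exists>e. e \<in> E \<and> nsq (vsub x e) < d + inverse (real (Suc k))"
  proof
    fix k
    have "Inf D < d + inverse (real (Suc k))" unfolding d_def by simp
    from cInf_lessD[OF Dne this] show "\<exists>e. e \<in> E \<and> nsq (vsub x e) < d + inverse (real (Suc k))"
      unfolding D_def by blast
  qed
  hence "\<exists>es. \<forall>k. es k \<in> E \<and> nsq (vsub x (es k)) < d + inverse (real (Suc k))" by (rule choice)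
  then obtain es where es: "\<And>k. es k \<in> E" "\<And>k. nsq (vsub x (es k)) < d + inverse (real (Suc k))" by blast
  have esl: "\<And>k. es k \<in> ell2" using es(1) Eell by blast
  have cl: "nsq (vsub (es i) (es j)) \<le> 2 * inverse (real (Suc i)) + 2 * inverse (real (Suc j))" for i j
  proof -
    define a where "a = vsub x (es j)"
    define b where "b = vsub x (es i)"
    have ab: "a \<in> ell2" "b \<in> ell2" unfolding a_def b_def using x esl by (auto intro: ell2_sub)
    define m where "m = vscale (1/2) (vadd (es i) (es j))"
    have mE: "m \<in> E" unfolding m_def by (rule cs_scale[OF E cs_add[OF E es(1) es(1)]])
    have "vadd a b = vscale 2 (vsub x m)" unfolding a_def b_def m_def
      by (simp add: vadd_def vsub_def vscale_def fun_eq_iff algebra_simps)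
    hence "nsq (vadd a b) = 4 * nsq (vsub x m)"
      using nsq_scale[OF ell2_sub[OF x Eell[OF mE]], of 2] by simp
    hence "4 * d \<le> nsq (vadd a b)" using dle[OF mE] by simp
    moreover have "nsq (vsub a b) = nsq (vsub (es i) (es j))" unfolding a_def b_def by (simp add: vsub_def fun_eq_iff)
    moreover note parallelogram[OF ab]
    moreover have "nsq a < d + inverse (real (Suc j))" "nsq b < d + inverse (real (Suc i))"
      unfolding a_def b_def using es(2) by auto
    ultimately show ?thesis by linarith
  qed
  have lc: "lcauchy es" unfolding lcauchy_def
  proof (intro conjI allI impI)
    show "es k \<in> ell2" for k by (rule esl)
    fix e :: real assume e: "e > 0"
    obtain N where N: "inverse (real (Suc N)) < e\<^sup>2 / 4" using reals_Archimedean[of "e\<^sup>2/4"] e by auto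
    show "\<exists>N. \<forall>m\<ge>N. \<forall>n\<ge>N. l2norm (vsub (es m) (es n)) < e"
    proof (intro exI[of _ N] allI impI)
      fix m n assume mn: "N \<le> m" "N \<le> n"
      have "inverse (real (Suc m)) \<le> inverse (real (Suc N))" "inverse (real (Suc n)) \<le> inverse (real (Suc N))"
        using mn by (auto simp: field_simps)
      hence "nsq (vsub (es m) (es n)) < e\<^sup>2" using cl[of m n] N by linarith
      hence "(l2norm (vsub (es m) (es n)))\<^sup>2 < e\<^sup>2" using l2norm_sq[OF ell2_sub[OF esl esl]] by simp
      thus "l2norm (vsub (es m) (es n)) < e" using e by (meson abs_less_iff power2_less_imp_less less_imp_le)
    qed
  qed
  obtain p where p: "p \<in> ell2" "(\<lambda>k. l2norm (vsub (es k) p)) \<longlonglongrightarrow> 0" using ell2_complete[OF lc] by blast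
  have pE: "p \<in> E" by (rule cs_closed[OF E _ p]) (use es in blast)
  have "l2norm (vsub x p) \<le> sqrt d"
  proof -
    have lim: "(\<lambda>k. sqrt (d + inverse (real (Suc k))) + l2norm (vsub (es k) p)) \<longlonglongrightarrow> sqrt (d + 0) + 0"
      by (intro tendsto_intros LIMSEQ_inverse_real_of_nat p(2))
    have "\<forall>k. l2norm (vsub x p) \<le> sqrt (d + inverse (real (Suc k))) + l2norm (vsub (es k) p)"
    proof
      fix k
      have "l2norm (vsub x p) \<le> l2norm (vsub x (es k)) + l2norm (vsub (es k) p)"
        by (rule triangle_sub[OF x esl p(1)])
      moreover have "l2norm (vsub x (es k)) \<le> sqrt (d + inverse (real (Suc k)))"
        unfolding l2norm_nsq using es(2)[of k] by simp
      ultimately show "l2norm (vsub x p) \<le> sqrt (d + inverse (real (Suc k))) + l2norm (vsub (es k) p)" by linarith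
    qed
    hence "l2norm (vsub x p) \<le> sqrt (d + 0) + 0" by (intro LIMSEQ_le_const[OF lim]) auto
    thus ?thesis by simp
  qed
  hence zle: "nsq (vsub x p) \<le> d" using d0 l2norm_sq[OF ell2_sub[OF x p(1)]]
    by (metis l2norm_nonneg ell2_sub x p(1) power_mono real_sqrt_pow2)
  have "\<forall>f\<in>E. l2inner f (vsub x p) = 0"
  proof
    fix f assume fE: "f \<in> E"
    have f: "f \<in> ell2" by (rule Eell[OF fE])
    define z where "z = vsub x p"
    have z: "z \<in> ell2" unfolding z_def by (rule ell2_sub[OF x p(1)])
    show "l2inner f (vsub x p) = 0"
    proof (cases "nsq f = 0")
      case True
      hence "f = (\<lambda>n. 0)" using nsq_zero_iff[OF f] by simp
      thus ?thesis by (simp add: inner_zero_left)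
    next
      case False
      define n where "n = nsq f"
      have n: "n > 0" using False nsq_nonneg[OF f] unfolding n_def by linarith
      define c where "c = l2inner f z"
      define t where "t = c / complex_of_real n"
      have ptE: "vadd p (vscale t f) \<in> E" by (rule cs_add[OF E pE cs_scale[OF E fE]])
      have eq: "vsub x (vadd p (vscale t f)) = vsub z (vscale t f)"
        unfolding z_def by (simp add: vsub_def vadd_def fun_eq_iff)
      have "nsq (vsub z (vscale t f)) = nsq z + nsq (vscale t f) - 2 * Re (l2inner z (vscale t f))"
        by (rule nsq_sub[OF z ell2_scale[OF f]])
      also have "nsq (vscale t f) = (cmod t)\<^sup>2 * n" unfolding n_def by (rule nsq_scale[OF f])
      also have "l2inner z (vscale t f) = t * cnj c"
        unfolding c_def using inner_scale_right[OF z f] inner_commute[OF z f] by simp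
      also have "(cmod t)\<^sup>2 * n = (cmod c)\<^sup>2 / n" unfolding t_def using n
        by (simp add: norm_divide power_divide power2_eq_square)
      also have "Re (t * cnj c) = (cmod c)\<^sup>2 / n"
      proof -
        have "t * cnj c = complex_of_real ((cmod c)\<^sup>2 / n)" unfolding t_def
          using complex_norm_square[of c] by simp
        thus ?thesis by simp
      qed
      finally have "nsq (vsub z (vscale t f)) = nsq z - (cmod c)\<^sup>2 / n" by simp
      moreover have "d \<le> nsq (vsub z (vscale t f))" using dle[OF ptE] eq by simp
      moreover have "nsq z \<le> d" using zle unfolding z_def .
      ultimately have "(cmod c)\<^sup>2 / n \<le> 0" by linarith
      hence "(cmod c)\<^sup>2 \<le> 0" using n by (simp add: divide_le_0_iff)
      hence "c = 0" by simp
      thus ?thesis unfolding c_def z_def .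
    qed
  qed
  thus ?thesis using pE by blast
qed

lemma sum_in_ell2: assumes "finite S" shows "(\<forall>s\<in>S. f s \<in> ell2) \<Longrightarrow> (\<lambda>n. \<Sum>s\<in>S. f s n) \<in> ell2"
  using assms
proof (induction S rule: finite_induct)
  case empty thus ?case by (simp add: ell2_zero)
next
  case (insert a S)
  have "(\<lambda>n. \<Sum>s\<in>insert a S. f s n) = vadd (f a) (\<lambda>n. \<Sum>s\<in>S. f s n)"
    using insert by (simp add: vadd_def)
  thus ?case using insert ell2_add by simp
qed

lemma lspan_ell2: assumes "finite S" "S \<subseteq> ell2" "y \<in> lspan S" shows "y \<in> ell2"
proof -
  obtain c where y: "y = (\<lambda>n. \<Sum>s\<in>S. c s * s n)" using assms(3) unfolding lspan_def by blast
  have "(\<lambda>n. \<Sum>s\<in>S. vscale (c s) s n) \<in> ell2"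
    by (rule sum_in_ell2[OF assms(1)]) (use assms(2) ell2_scale in blast)
  thus ?thesis using y by (simp add: vscale_def)
qed

lemma lspan_I: "y = (\<lambda>n. \<Sum>s\<in>S. c s * s n) \<Longrightarrow> y \<in> lspan S"
  unfolding lspan_def by blast

lemma lspan_insert_decomp: assumes "finite S" "a \<notin> S" "y \<in> lspan (insert a S)"
  shows "\<exists>\<alpha> z. z \<in> lspan S \<and> y = vadd (vscale \<alpha> a) z"
proof -
  obtain c where y: "y = (\<lambda>n. \<Sum>s\<in>insert a S. c s * s n)" using assms(3) unfolding lspan_def by blast
  have "y = vadd (vscale (c a) a) (\<lambda>n. \<Sum>s\<in>S. c s * s n)"
    using y assms by (simp add: vadd_def vscale_def)
  moreover have "(\<lambda>n. \<Sum>s\<in>S. c s * s n) \<in> lspan S" by (rule lspan_I) (rule refl)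
  ultimately show ?thesis by blast
qed

lemma lspan_insert_intro: assumes "finite S" "a \<notin> S" "z \<in> lspan S"
  shows "vadd (vscale \<alpha> a) z \<in> lspan (insert a S)"
proof -
  obtain c where z: "z = (\<lambda>n. \<Sum>s\<in>S. c s * s n)" using assms(3) unfolding lspan_def by blast
  define c' where "c' = c(a := \<alpha>)"
  have "(\<lambda>n. \<Sum>s\<in>insert a S. c' s * s n) = vadd (vscale \<alpha> a) (\<lambda>n. \<Sum>s\<in>S. c' s * s n)"
    using assms by (simp add: vadd_def vscale_def c'_def)
  also have "(\<lambda>n. \<Sum>s\<in>S. c' s * s n) = z" unfolding z c'_def using assms(2)
    by (intro ext sum.cong) auto
  finally have "vadd (vscale \<alpha> a) z = (\<lambda>n. \<Sum>s\<in>insert a S. c' s * s n)" by simp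
  thus ?thesis by (rule lspan_I)
qed

lemma lspan_empty: "lspan {} = {(\<lambda>n. 0)}" by (simp add: lspan_def)

lemma lspan_zero: "(\<lambda>n. 0) \<in> lspan S"
  by (rule lspan_I[where c="\<lambda>s. 0"]) simp

lemma lspan_comb: assumes "x \<in> lspan S" "y \<in> lspan S" shows "vadd (vscale a x) (vscale b y) \<in> lspan S"
proof -
  obtain c where x: "x = (\<lambda>n. \<Sum>s\<in>S. c s * s n)" using assms(1) unfolding lspan_def by blast
  obtain d where y: "y = (\<lambda>n. \<Sum>s\<in>S. d s * s n)" using assms(2) unfolding lspan_def by blast
  have "vadd (vscale a x) (vscale b y) = (\<lambda>n. \<Sum>s\<in>S. (a * c s + b * d s) * s n)"
    unfolding x y by (simp add: vadd_def vscale_def sum_distrib_left sum.distrib algebra_simps)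
  thus ?thesis by (rule lspan_I)
qed

lemma lspan_add: "x \<in> lspan S \<Longrightarrow> y \<in> lspan S \<Longrightarrow> vadd x y \<in> lspan S"
  using lspan_comb[of x S y 1 1] by (simp add: vscale_def)

lemma lspan_scale: "x \<in> lspan S \<Longrightarrow> vscale a x \<in> lspan S"
  using lspan_comb[of x S x a 0] by (simp add: vscale_def vadd_def)

lemma lspan_sub: "x \<in> lspan S \<Longrightarrow> y \<in> lspan S \<Longrightarrow> vsub x y \<in> lspan S"
  using lspan_comb[of x S y 1 "-1"] by (simp add: vscale_def vadd_def vsub_def)

lemma lspan_base: assumes "finite S" "s \<in> S" shows "s \<in> lspan S"
proof -
  have "(\<Sum>t\<in>S. (if t = s then 1 else 0) * t n) = (\<Sum>t\<in>S. if t = s then t n else 0)" for n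
    by (rule sum.cong) auto
  also have "(\<Sum>t\<in>S. if t = s then t n else 0) = s n" for n using assms by (simp add: sum.delta)
  finally have "(\<lambda>n. \<Sum>t\<in>S. (if t = s then 1 else 0) * t n) = s" by (intro ext)
  thus ?thesis by (intro lspan_I[where c="\<lambda>t. if t = s then 1 else 0"]) simp
qed

lemma lspan_orth: assumes "finite S" "S \<subseteq> ell2" "z \<in> ell2" "\<forall>t\<in>S. l2inner t z = 0"
  shows "y \<in> lspan S \<Longrightarrow> l2inner y z = 0"
  using assms
proof (induction S arbitrary: y rule: finite_induct)
  case empty thus ?case by (simp add: lspan_empty inner_zero_left)
next
  case (insert a S)
  obtain \<alpha> w where w: "w \<in> lspan S" "y = vadd (vscale \<alpha> a) w"
    using lspan_insert_decomp[OF insert(1,2,4)] by blast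
  have a: "a \<in> ell2" and Sl: "S \<subseteq> ell2" using insert(5) by auto
  have wl: "w \<in> ell2" by (rule lspan_ell2[OF insert(1) Sl w(1)])
  have "l2inner y z = l2inner (vscale \<alpha> a) z + l2inner w z"
    unfolding w(2) by (rule inner_add_left[OF ell2_scale[OF a] wl insert(6)])
  also have "l2inner (vscale \<alpha> a) z = cnj \<alpha> * l2inner a z" by (rule inner_scale_left[OF a insert(6)])
  also have "l2inner a z = 0" using insert(7) by simp
  also have "l2inner w z = 0"
  proof -
    have "\<forall>t\<in>S. l2inner t z = 0" using insert(7) by simp
    thus ?thesis by (rule insert(3)[OF w(1) Sl insert(6)])
  qed
  finally show ?case by simp
qed

definition subsp :: "vec set \<Rightarrow> bool" where
  "subsp V \<longleftrightarrow> (\<lambda>n. 0) \<in> V \<and> (\<forall>x\<in>V. \<forall>y\<in>V. \<forall>a b. vadd (vscale a x) (vscale b y) \<in> V)"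

lemma lspan_in_subsp: assumes "finite S" "subsp V" "S \<subseteq> V" shows "y \<in> lspan S \<Longrightarrow> y \<in> V"
  using assms
proof (induction S arbitrary: y rule: finite_induct)
  case empty thus ?case by (simp add: lspan_empty subsp_def)
next
  case (insert a S)
  obtain \<alpha> w where w: "w \<in> lspan S" "y = vadd (vscale \<alpha> a) w"
    using lspan_insert_decomp[OF insert(1,2,4)] by blast
  have "w \<in> V" using insert(3)[OF w(1) insert(5)] insert(6) by simp
  moreover have "a \<in> V" using insert(6) by simp
  ultimately have "vadd (vscale \<alpha> a) (vscale 1 w) \<in> V" using insert(5) unfolding subsp_def by blast
  thus ?case using w(2) by (simp add: vscale_def)
qed

lemma finite_proj: assumes "finite S" "S \<subseteq> ell2"
  shows "x \<in> ell2 \<Longrightarrow> \<exists>s\<in>lspan S. \<forall>t\<in>S. l2inner t (vsub x s) = 0"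
  using assms
proof (induction S arbitrary: x rule: finite_induct)
  case empty thus ?case using lspan_zero by blast
next
  case (insert a S)
  have a: "a \<in> ell2" and Sl: "S \<subseteq> ell2" using insert(5) by auto
  have Sfin: "finite S" by fact
  have sp: "\<And>u. u \<in> lspan S \<Longrightarrow> u \<in> ell2" using lspan_ell2[OF Sfin Sl] by blast
  obtain \<sigma> where \<sigma>: "\<sigma> \<in> lspan S" "\<forall>t\<in>S. l2inner t (vsub a \<sigma>) = 0" using insert(3)[OF a Sl] by blast
  obtain s where s: "s \<in> lspan S" "\<forall>t\<in>S. l2inner t (vsub x s) = 0" using insert(3)[OF insert(4) Sl] by blast
  have sl: "s \<in> ell2" and \<sigma>l: "\<sigma> \<in> ell2" using sp s(1) \<sigma>(1) by auto
  define t where "t = vsub a \<sigma>"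
  have tl: "t \<in> ell2" unfolding t_def by (rule ell2_sub[OF a \<sigma>l])
  have ins: "\<And>u. u \<in> lspan S \<Longrightarrow> u \<in> lspan (insert a S)"
  proof -
    fix u assume "u \<in> lspan S"
    hence "vadd (vscale 0 a) u \<in> lspan (insert a S)" by (rule lspan_insert_intro[OF Sfin insert(2)])
    thus "u \<in> lspan (insert a S)" by (simp add: vadd_def vscale_def)
  qed
  have ains: "a \<in> lspan (insert a S)" by (rule lspan_base) (use Sfin in simp_all)
  show ?case
  proof (cases "nsq t = 0")
    case True
    hence t0: "t = (\<lambda>n. 0)" using nsq_zero_iff[OF tl] by simp
    hence aeq: "a = \<sigma>" unfolding t_def by (simp add: vsub_def fun_eq_iff)
    have xs: "vsub x s \<in> ell2" by (rule ell2_sub[OF insert(4) sl])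
    have "l2inner a (vsub x s) = 0" unfolding aeq
      by (rule lspan_orth[OF Sfin Sl xs s(2) \<sigma>(1)])
    thus ?thesis using s ins by blast
  next
    case False
    define c where "c = l2inner t (vsub x s) / complex_of_real (nsq t)"
    define s' where "s' = vadd s (vscale c t)"
    have s'l: "s' \<in> ell2" unfolding s'_def by (rule ell2_add[OF sl ell2_scale[OF tl]])
    have s'eq: "s' = vadd (vscale c a) (vsub s (vscale c \<sigma>))"
      unfolding s'_def t_def by (simp add: vadd_def vsub_def vscale_def fun_eq_iff algebra_simps)
    have s'in: "s' \<in> lspan (insert a S)" unfolding s'eq
      by (rule lspan_insert_intro[OF Sfin insert(2) lspan_sub[OF s(1) lspan_scale[OF \<sigma>(1)]]])
    have xs'l: "vsub x s' \<in> ell2" by (rule ell2_sub[OF insert(4) s'l])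
    have xs'eq: "vsub x s' = vsub (vsub x s) (vscale c t)" unfolding s'_def
      by (simp add: vadd_def vsub_def vscale_def fun_eq_iff)
    have xsl: "vsub x s \<in> ell2" by (rule ell2_sub[OF insert(4) sl])
    have orthS: "\<forall>u\<in>S. l2inner u (vsub x s') = 0"
    proof
      fix u assume u: "u \<in> S"
      have ul: "u \<in> ell2" using u Sl by auto
      have "l2inner u (vsub x s') = l2inner u (vsub x s) - l2inner u (vscale c t)"
        unfolding xs'eq by (rule inner_sub_right[OF ul xsl ell2_scale[OF tl]])
      also have "l2inner u (vscale c t) = c * l2inner u t" by (rule inner_scale_right[OF ul tl])
      finally show "l2inner u (vsub x s') = 0" using u s(2) \<sigma>(2) unfolding t_def by simp
    qed
    have ortht: "l2inner t (vsub x s') = 0"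
    proof -
      have "l2inner t (vsub x s') = l2inner t (vsub x s) - l2inner t (vscale c t)"
        unfolding xs'eq by (rule inner_sub_right[OF tl xsl ell2_scale[OF tl]])
      also have "l2inner t (vscale c t) = c * l2inner t t" by (rule inner_scale_right[OF tl tl])
      also have "l2inner t t = complex_of_real (nsq t)" by (rule l2inner_self[OF tl])
      finally show ?thesis unfolding c_def using False by simp
    qed
    have "l2inner a (vsub x s') = 0"
    proof -
      have "a = vadd t \<sigma>" unfolding t_def by (simp add: vadd_def vsub_def)
      hence "l2inner a (vsub x s') = l2inner t (vsub x s') + l2inner \<sigma> (vsub x s')"
        using inner_add_left[OF tl \<sigma>l xs'l] by simp
      also have "l2inner \<sigma> (vsub x s') = 0" by (rule lspan_orth[OF Sfin Sl xs'l orthS \<sigma>(1)])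
      finally show ?thesis using ortht by simp
    qed
    thus ?thesis using orthS s'in by blast
  qed
qed

definition rk1 :: "vec \<Rightarrow> vec \<Rightarrow> vec" where
  "rk1 b y = vsub y (vscale (l2inner b y / complex_of_real (nsq b)) b)"

lemma rk1_in: "b \<in> ell2 \<Longrightarrow> y \<in> ell2 \<Longrightarrow> rk1 b y \<in> ell2"
  unfolding rk1_def by (intro ell2_sub ell2_scale)

lemma rk1_orth: assumes b: "b \<in> ell2" "nsq b \<noteq> 0" and y: "y \<in> ell2"
  shows "l2inner b (rk1 b y) = 0"
proof -
  have "l2inner b (rk1 b y) = l2inner b y - l2inner b (vscale (l2inner b y / complex_of_real (nsq b)) b)"
    unfolding rk1_def by (rule inner_sub_right[OF b(1) y ell2_scale[OF b(1)]])
  also have "l2inner b (vscale (l2inner b y / complex_of_real (nsq b)) b) = (l2inner b y / complex_of_real (nsq b)) * l2inner b b"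
    by (rule inner_scale_right[OF b(1) b(1)])
  also have "l2inner b b = complex_of_real (nsq b)" by (rule l2inner_self[OF b(1)])
  finally show ?thesis using b(2) by simp
qed

lemma rk1_decomp: "y = vadd (rk1 b y) (vscale (l2inner b y / complex_of_real (nsq b)) b)"
  unfolding rk1_def by (simp add: vadd_def vsub_def)

lemma rk1_norm: assumes b: "b \<in> ell2" "nsq b \<noteq> 0" and y: "y \<in> ell2"
  shows "l2norm (rk1 b y) \<le> l2norm y"
proof -
  define \<beta> where "\<beta> = l2inner b y / complex_of_real (nsq b)"
  have r: "rk1 b y \<in> ell2" by (rule rk1_in[OF b(1) y])
  have orth: "l2inner (rk1 b y) (vscale \<beta> b) = 0"
  proof -
    have "l2inner (rk1 b y) (vscale \<beta> b) = \<beta> * l2inner (rk1 b y) b" by (rule inner_scale_right[OF r b(1)])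
    also have "l2inner (rk1 b y) b = cnj (l2inner b (rk1 b y))" by (rule inner_commute[OF b(1) r])
    finally show ?thesis using rk1_orth[OF b y] by simp
  qed
  have "nsq y = nsq (rk1 b y) + nsq (vscale \<beta> b)"
    using pythag[OF r ell2_scale[OF b(1)] orth] rk1_decomp[of y b] unfolding \<beta>_def by simp
  hence "nsq (rk1 b y) \<le> nsq y" using nsq_nonneg[OF ell2_scale[OF b(1)], of \<beta>] by linarith
  thus ?thesis by (simp add: l2norm_nsq)
qed

lemma rk1_lin: assumes b: "b \<in> ell2" shows "lin (rk1 b)"
  unfolding lin_def
proof (intro conjI ballI allI)
  show "rk1 b x \<in> ell2" if "x \<in> ell2" for x using rk1_in[OF b that] .
  fix x y a c assume x: "x \<in> ell2" and y: "y \<in> ell2"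
  have "l2inner b (vadd (vscale a x) (vscale c y)) = a * l2inner b x + c * l2inner b y"
    using inner_add_right[OF b ell2_scale[OF x] ell2_scale[OF y]] inner_scale_right[OF b x] inner_scale_right[OF b y]
    by simp
  thus "rk1 b (vadd (vscale a x) (vscale c y)) = vadd (vscale a (rk1 b x)) (vscale c (rk1 b y))"
    unfolding rk1_def by (simp add: vadd_def vsub_def vscale_def fun_eq_iff algebra_simps add_divide_distrib)
qed

lemma rk1_self: assumes b: "b \<in> ell2" "nsq b \<noteq> 0" shows "rk1 b (vscale \<alpha> b) = (\<lambda>n. 0)"
proof -
  have "l2inner b (vscale \<alpha> b) = \<alpha> * complex_of_real (nsq b)"
    using inner_scale_right[OF b(1) b(1)] l2inner_self[OF b(1)] by simp
  thus ?thesis unfolding rk1_def using b(2) by (simp add: vsub_def vscale_def)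
qed

lemma lcauchy_scalar: assumes "Cauchy \<beta>" "b \<in> ell2" shows "lcauchy (\<lambda>k. vscale (\<beta> k) b)"
  unfolding lcauchy_def
proof (intro conjI allI impI)
  show "vscale (\<beta> k) b \<in> ell2" for k by (rule ell2_scale[OF assms(2)])
  fix e :: real assume e: "e > 0"
  have bn: "l2norm b \<ge> 0" by (rule l2norm_nonneg[OF assms(2)])
  have "e / (l2norm b + 1) > 0" using e bn by simp
  then obtain N where N: "\<forall>m\<ge>N. \<forall>n\<ge>N. dist (\<beta> m) (\<beta> n) < e / (l2norm b + 1)"
    using assms(1) unfolding Cauchy_def by blast
  show "\<exists>N. \<forall>m\<ge>N. \<forall>n\<ge>N. l2norm (vsub (vscale (\<beta> m) b) (vscale (\<beta> n) b)) < e"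
  proof (intro exI[of _ N] allI impI)
    fix m n assume mn: "N \<le> m" "N \<le> n"
    have "vsub (vscale (\<beta> m) b) (vscale (\<beta> n) b) = vscale (\<beta> m - \<beta> n) b"
      by (simp add: vsub_def vscale_def fun_eq_iff algebra_simps)
    hence "l2norm (vsub (vscale (\<beta> m) b) (vscale (\<beta> n) b)) = cmod (\<beta> m - \<beta> n) * l2norm b"
      using l2norm_scale[OF assms(2)] by simp
    also have "\<dots> \<le> cmod (\<beta> m - \<beta> n) * (l2norm b + 1)" by (rule mult_left_mono) auto
    also have "\<dots> < e / (l2norm b + 1) * (l2norm b + 1)"
      using N mn bn by (intro mult_strict_right_mono) (auto simp: dist_norm)
    also have "\<dots> = e" using bn by simp
    finally show "l2norm (vsub (vscale (\<beta> m) b) (vscale (\<beta> n) b)) < e" .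
  qed
qed

lemma fd_cauchy: fixes z :: "nat \<Rightarrow> vec" and L :: "vec \<Rightarrow> vec" and M :: real assumes "finite S"
  shows "S \<subseteq> ell2 \<Longrightarrow> lin L \<Longrightarrow> \<forall>k. z k \<in> lspan S \<Longrightarrow> \<forall>k. l2norm (L (z k)) \<le> M \<Longrightarrow>
         \<exists>r. strict_mono r \<and> lcauchy (\<lambda>k. L (z (r k)))"
  using assms
proof (induction S arbitrary: L z M rule: finite_induct)
  case empty
  have "z k = (\<lambda>n. 0)" for k using empty(3) by (simp add: lspan_empty)
  hence "L (z k) = (\<lambda>n. 0)" for k using lin_zero[OF empty(2)] by simp
  hence "lcauchy (\<lambda>k. L (z (id k)))" using lcauchy_const[OF ell2_zero] by simp
  thus ?case using strict_mono_id by blast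
next
  case (insert a S)
  have a: "a \<in> ell2" and Sl: "S \<subseteq> ell2" using insert(4) by auto
  note Sfin = insert(1)
  have "\<forall>k. \<exists>p. snd p \<in> lspan S \<and> z k = vadd (vscale (fst p) a) (snd p)"
    using lspan_insert_decomp[OF Sfin insert(2)] insert(6) by fastforce
  hence "\<exists>g. \<forall>k. snd (g k) \<in> lspan S \<and> z k = vadd (vscale (fst (g k)) a) (snd (g k))" by (rule choice)
  then obtain g where g: "\<And>k. snd (g k) \<in> lspan S" "\<And>k. z k = vadd (vscale (fst (g k)) a) (snd (g k))" by blast
  define w where "w k = snd (g k)" for k
  define \<alpha> where "\<alpha> k = fst (g k)" for k
  have w: "\<And>k. w k \<in> lspan S" "\<And>k. z k = vadd (vscale (\<alpha> k) a) (w k)" using g unfolding w_def \<alpha>_def by auto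
  have wl: "\<And>k. w k \<in> ell2" using lspan_ell2[OF Sfin Sl] w(1) by blast
  define b where "b = L a"
  have bl: "b \<in> ell2" unfolding b_def by (rule lin_in[OF insert(5) a])
  have Lz: "L (z k) = vadd (vscale (\<alpha> k) b) (L (w k))" for k
    unfolding w(2) b_def using lin_add[OF insert(5) ell2_scale[OF a] wl] lin_scale[OF insert(5) a] by simp
  have Lzl: "\<And>k. L (z k) \<in> ell2" using Lz bl lin_in[OF insert(5) wl] by (simp add: ell2_add ell2_scale)
  show ?case
  proof (cases "nsq b = 0")
    case True
    hence "b = (\<lambda>n. 0)" using nsq_zero_iff[OF bl] by simp
    hence eq: "L (z k) = L (w k)" for k using Lz by (simp add: vadd_def vscale_def)
    have "\<forall>k. l2norm (L (w k)) \<le> M" using insert(7) eq by simp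
    from insert(3)[OF Sl insert(5) _ this] w(1) obtain r where r: "strict_mono r" "lcauchy (\<lambda>k. L (w (r k)))" by blast
    hence "lcauchy (\<lambda>k. L (z (r k)))" using eq by simp
    thus ?thesis using r(1) by blast
  next
    case False
    define L' where "L' y = rk1 b (L y)" for y
    have L'lin: "lin L'" unfolding L'_def[abs_def] by (rule lin_compose[OF rk1_lin[OF bl] insert(5)])
    have L'eq: "L' (w k) = rk1 b (L (z k))" for k
    proof -
      have "rk1 b (L (z k)) = vadd (rk1 b (vscale (\<alpha> k) b)) (rk1 b (L (w k)))"
        unfolding Lz by (rule lin_add[OF rk1_lin[OF bl] ell2_scale[OF bl] lin_in[OF insert(5) wl]])
      thus ?thesis unfolding L'_def using rk1_self[OF bl False] by (simp add: vadd_def)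
    qed
    have "\<forall>k. l2norm (L' (w k)) \<le> M"
    proof
      fix k
      have "l2norm (L' (w k)) \<le> l2norm (L (z k))" unfolding L'eq by (rule rk1_norm[OF bl False Lzl])
      thus "l2norm (L' (w k)) \<le> M" using insert(7) by (meson order_trans)
    qed
    from insert(3)[OF Sl L'lin _ this] w(1) obtain r1 where r1: "strict_mono r1" "lcauchy (\<lambda>k. L' (w (r1 k)))" by blast
    define \<beta> where "\<beta> k = l2inner b (L (z k)) / complex_of_real (nsq b)" for k
    have nb: "nsq b > 0" using False nsq_nonneg[OF bl] by linarith
    have "\<forall>k. cmod (\<beta> (r1 k)) \<le> l2norm b * M / nsq b"
    proof
      fix k
      have "cmod (l2inner b (L (z (r1 k)))) \<le> l2norm b * l2norm (L (z (r1 k)))" by (rule cauchy_schwarz[OF bl Lzl])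
      also have "\<dots> \<le> l2norm b * M" using insert(7) l2norm_nonneg[OF bl] by (intro mult_left_mono) auto
      finally show "cmod (\<beta> (r1 k)) \<le> l2norm b * M / nsq b" unfolding \<beta>_def using nb
        by (simp add: norm_divide divide_right_mono)
    qed
    hence "bounded (range (\<beta> \<circ> r1))" unfolding bounded_iff by auto
    then obtain l r2 where r2: "strict_mono r2" "((\<beta> \<circ> r1) \<circ> r2) \<longlonglongrightarrow> l"
      using bounded_imp_convergent_subsequence by blast
    have cb: "Cauchy ((\<beta> \<circ> r1) \<circ> r2)" by (rule LIMSEQ_imp_Cauchy[OF r2(2)])
    have c1: "lcauchy ((\<lambda>k. L' (w (r1 k))) \<circ> r2)" by (rule lcauchy_subseq[OF r1(2) r2(1)])
    have c2: "lcauchy (\<lambda>k. vscale (((\<beta> \<circ> r1) \<circ> r2) k) b)" by (rule lcauchy_scalar[OF cb bl])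
    have "lcauchy (\<lambda>k. vadd (((\<lambda>k. L' (w (r1 k))) \<circ> r2) k) (vscale (((\<beta> \<circ> r1) \<circ> r2) k) b))"
      by (rule lcauchy_add[OF c1 c2])
    moreover have "vadd (((\<lambda>k. L' (w (r1 k))) \<circ> r2) k) (vscale (((\<beta> \<circ> r1) \<circ> r2) k) b) = L (z ((r1 \<circ> r2) k))" for k
      using rk1_decomp[of "L (z (r1 (r2 k)))" b] L'eq[of "r1 (r2 k)"] by (simp add: \<beta>_def)
    ultimately have "lcauchy (\<lambda>k. L (z ((r1 \<circ> r2) k)))" by simp
    moreover have "strict_mono (r1 \<circ> r2)" using r1(1) r2(1) by (rule strict_mono_o)
    ultimately show ?thesis by blast
  qed
qed

lemma lcauchy_dom: assumes f: "\<forall>k. f k \<in> ell2" and g: "lcauchy g" and B: "B \<ge> 0"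
  and dom: "\<forall>i j. nsq (vsub (f i) (f j)) \<le> B * l2norm (vsub (g i) (g j))"
  shows "lcauchy f"
  unfolding lcauchy_def
proof (intro conjI allI impI)
  show "f k \<in> ell2" for k using f by blast
  fix e :: real assume e: "e > 0"
  have d: "e\<^sup>2 / (B + 1) > 0" using e B by simp
  then obtain N where N: "\<forall>m\<ge>N. \<forall>n\<ge>N. l2norm (vsub (g m) (g n)) < e\<^sup>2 / (B + 1)"
    using g unfolding lcauchy_def by blast
  have gl: "\<And>k. g k \<in> ell2" using g unfolding lcauchy_def by blast
  show "\<exists>N. \<forall>m\<ge>N. \<forall>n\<ge>N. l2norm (vsub (f m) (f n)) < e"
  proof (intro exI[of _ N] allI impI)
    fix m n assume mn: "N \<le> m" "N \<le> n"
    have x0: "0 \<le> l2norm (vsub (g m) (g n))" by (rule l2norm_nonneg[OF ell2_sub[OF gl gl]])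
    have "nsq (vsub (f m) (f n)) \<le> B * l2norm (vsub (g m) (g n))" using dom by blast
    also have "\<dots> \<le> (B + 1) * l2norm (vsub (g m) (g n))" using x0 by (simp add: distrib_right)
    also have "\<dots> < (B + 1) * (e\<^sup>2 / (B + 1))" using N mn B by (intro mult_strict_left_mono) auto
    also have "\<dots> = e\<^sup>2" using B by simp
    finally have "(l2norm (vsub (f m) (f n)))\<^sup>2 < e\<^sup>2" using l2norm_sq[OF ell2_sub] f by simp
    thus "l2norm (vsub (f m) (f n)) < e" using e by (meson abs_less_iff power2_less_imp_less less_imp_le)
  qed
qed

lemma subsp_ran: assumes P: "orth_proj P" shows "subsp (P ` ell2)"
  unfolding subsp_def
proof (intro conjI ballI allI)
  show "(\<lambda>n. 0) \<in> P ` ell2" using op_ran[OF P] lin_zero[OF op_lin[OF P]] ell2_zero by blast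
  fix x y a b assume x: "x \<in> P ` ell2" and y: "y \<in> P ` ell2"
  have xl: "x \<in> ell2" "P x = x" and yl: "y \<in> ell2" "P y = y" using x y op_ran[OF P] by auto
  have "P (vadd (vscale a x) (vscale b y)) = vadd (vscale a x) (vscale b y)"
    using lin_comb[OF op_lin[OF P] xl(1) yl(1)] xl yl by simp
  moreover have "vadd (vscale a x) (vscale b y) \<in> ell2" using xl yl by (simp add: ell2_add ell2_scale)
  ultimately show "vadd (vscale a x) (vscale b y) \<in> P ` ell2" using op_ran[OF P] by blast
qed

lemma le_zero_lim: assumes "\<forall>k. c \<le> B * a k" "a \<longlonglongrightarrow> 0" shows "c \<le> (0::real)"
proof -
  have "(\<lambda>k. B * a k) \<longlonglongrightarrow> B * 0" by (intro tendsto_intros assms(2))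
  thus ?thesis using assms(1) by (intro LIMSEQ_le_const[of "\<lambda>k. B * a k"]) auto
qed

definition Eorth :: "(vec \<Rightarrow> vec) \<Rightarrow> vec set \<Rightarrow> vec set" where
  "Eorth P S = {v \<in> P ` ell2. \<forall>t\<in>S. l2inner t v = 0}"

lemma Eorth_props: assumes P: "orth_proj P" and S: "finite S" "S \<subseteq> P ` ell2"
  shows "closed_subspace (Eorth P S) \<and> Eorth P S \<subseteq> P ` ell2 \<and> fin_codim_in (Eorth P S) (P ` ell2)"
proof (intro conjI)
  have ranl: "\<And>v. v \<in> P ` ell2 \<Longrightarrow> v \<in> ell2" using op_ran[OF P] by blast
  have Sl: "S \<subseteq> ell2" using S(2) ranl by blast
  show sub: "Eorth P S \<subseteq> P ` ell2" unfolding Eorth_def by blast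
  show "closed_subspace (Eorth P S)" unfolding closed_subspace_def
  proof (intro conjI allI ballI impI)
    show "Eorth P S \<subseteq> ell2" using sub ranl by blast
    show "(\<lambda>n. 0) \<in> Eorth P S" unfolding Eorth_def using subsp_ran[OF P]
      by (simp add: subsp_def inner_zero_right)
    fix x y a b assume x: "x \<in> Eorth P S" and y: "y \<in> Eorth P S"
    have xl: "x \<in> ell2" "x \<in> P ` ell2" and yl: "y \<in> ell2" "y \<in> P ` ell2" using x y sub ranl by auto
    have "vadd (vscale a x) (vscale b y) \<in> P ` ell2" using subsp_ran[OF P] xl yl unfolding subsp_def by blast
    moreover have "\<forall>t\<in>S. l2inner t (vadd (vscale a x) (vscale b y)) = 0"
    proof
      fix t assume t: "t \<in> S"
      have tl: "t \<in> ell2" using t Sl by blast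
      have "l2inner t (vadd (vscale a x) (vscale b y)) = a * l2inner t x + b * l2inner t y"
        using inner_add_right[OF tl ell2_scale[OF xl(1)] ell2_scale[OF yl(1)]]
          inner_scale_right[OF tl xl(1)] inner_scale_right[OF tl yl(1)] by simp
      thus "l2inner t (vadd (vscale a x) (vscale b y)) = 0" using x y t unfolding Eorth_def by simp
    qed
    ultimately show "vadd (vscale a x) (vscale b y) \<in> Eorth P S" unfolding Eorth_def by blast
  next
    fix xs :: "nat \<Rightarrow> vec" and x
    assume a: "(\<forall>k. xs k \<in> Eorth P S) \<and> x \<in> ell2 \<and> (\<lambda>k. l2norm (vsub (xs k) x)) \<longlonglongrightarrow> 0"
    have xs: "\<And>k. xs k \<in> ell2" "\<And>k. P (xs k) = xs k" "\<And>k. \<forall>t\<in>S. l2inner t (xs k) = 0"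
      using a unfolding Eorth_def using op_ran[OF P] by auto
    have x: "x \<in> ell2" using a by blast
    have lim: "(\<lambda>k. l2norm (vsub (xs k) x)) \<longlonglongrightarrow> 0" using a by blast
    have Px: "P x = x"
    proof -
      have pl: "vsub (P x) x \<in> ell2" by (rule ell2_sub[OF op_in[OF P x] x])
      have "\<forall>k. l2norm (vsub (P x) x) \<le> 2 * l2norm (vsub (xs k) x)"
      proof
        fix k
        have "l2norm (vsub (P x) x) \<le> l2norm (vsub (P x) (xs k)) + l2norm (vsub (xs k) x)"
          by (rule triangle_sub[OF op_in[OF P x] xs(1) x])
        also have "vsub (P x) (xs k) = P (vsub x (xs k))"
          using lin_sub[OF op_lin[OF P] x xs(1)] xs(2) by simp
        also have "l2norm (P (vsub x (xs k))) \<le> l2norm (vsub x (xs k))" by (rule op_norm_le[OF P ell2_sub[OF x xs(1)]])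
        also have "l2norm (vsub x (xs k)) = l2norm (vsub (xs k) x)" by (rule l2norm_sub_sym[OF x xs(1)])
        finally show "l2norm (vsub (P x) x) \<le> 2 * l2norm (vsub (xs k) x)" by simp
      qed
      hence "l2norm (vsub (P x) x) \<le> 0" by (rule le_zero_lim[OF _ lim])
      hence "nsq (vsub (P x) x) = 0" using l2norm_nonneg[OF pl] l2norm_sq[OF pl] by simp
      hence "vsub (P x) x = (\<lambda>n. 0)" using nsq_zero_iff[OF pl] by simp
      thus ?thesis by (simp add: vsub_def fun_eq_iff)
    qed
    have "\<forall>t\<in>S. l2inner t x = 0"
    proof
      fix t assume t: "t \<in> S"
      have tl: "t \<in> ell2" using t Sl by blast
      have "\<forall>k. cmod (l2inner t x) \<le> l2norm t * l2norm (vsub (xs k) x)"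
      proof
        fix k
        have "l2inner t x = l2inner t (xs k) - l2inner t (vsub (xs k) x)"
          using inner_sub_right[OF tl xs(1) x] by (simp add: vsub_def)
        also have "l2inner t (xs k) = 0" using xs(3) t by blast
        finally have "cmod (l2inner t x) = cmod (l2inner t (vsub (xs k) x))" by simp
        also have "\<dots> \<le> l2norm t * l2norm (vsub (xs k) x)" by (rule cauchy_schwarz[OF tl ell2_sub[OF xs(1) x]])
        finally show "cmod (l2inner t x) \<le> l2norm t * l2norm (vsub (xs k) x)" .
      qed
      hence "cmod (l2inner t x) \<le> 0" by (rule le_zero_lim[OF _ lim])
      thus "l2inner t x = 0" by simp
    qed
    thus "x \<in> Eorth P S" unfolding Eorth_def using op_ran[OF P] x Px by blast
  qed
  show "fin_codim_in (Eorth P S) (P ` ell2)" unfolding fin_codim_in_def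
  proof (intro exI[of _ S] conjI)
    show "finite S" "S \<subseteq> P ` ell2" using S by auto
    have spin: "\<And>y. y \<in> lspan S \<Longrightarrow> y \<in> P ` ell2" using lspan_in_subsp[OF S(1) subsp_ran[OF P] S(2)] by blast
    show "P ` ell2 = {vadd x y |x y. x \<in> Eorth P S \<and> y \<in> lspan S}"
    proof
      show "P ` ell2 \<subseteq> {vadd x y |x y. x \<in> Eorth P S \<and> y \<in> lspan S}"
      proof
        fix v assume v: "v \<in> P ` ell2"
        have vl: "v \<in> ell2" using v ranl by blast
        obtain s where s: "s \<in> lspan S" "\<forall>t\<in>S. l2inner t (vsub v s) = 0" using finite_proj[OF S(1) Sl vl] by blast
        have "vadd (vscale 1 v) (vscale (-1) s) \<in> P ` ell2" using subsp_ran[OF P] v spin[OF s(1)] unfolding subsp_def by blast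
        hence "vsub v s \<in> P ` ell2" by (simp add: vadd_def vscale_def vsub_def)
        hence "vsub v s \<in> Eorth P S" unfolding Eorth_def using s(2) by blast
        moreover have "v = vadd (vsub v s) s" by (simp add: vadd_def vsub_def)
        ultimately show "v \<in> {vadd x y |x y. x \<in> Eorth P S \<and> y \<in> lspan S}" using s(1) by blast
      qed
      show "{vadd x y |x y. x \<in> Eorth P S \<and> y \<in> lspan S} \<subseteq> P ` ell2"
      proof
        fix v assume "v \<in> {vadd x y |x y. x \<in> Eorth P S \<and> y \<in> lspan S}"
        then obtain x y where xy: "x \<in> Eorth P S" "y \<in> lspan S" "v = vadd x y" by blast
        have "vadd (vscale 1 x) (vscale 1 y) \<in> P ` ell2" using subsp_ran[OF P] sub xy(1) spin[OF xy(2)] unfolding subsp_def by blast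
        thus "v \<in> P ` ell2" using xy(3) by (simp add: vadd_def vscale_def)
      qed
    qed
  qed
qed

lemma T1_pc_from_calkin: assumes P: "orth_proj P" and Q: "orth_proj Q" and c: "calkin_le P Q"
  shows "pcM (\<lambda>x. cp Q (P x))"
proof -
  obtain C Cs where C: "bounded_op C" "bounded_op Cs" "adjoint_of Cs C"
    and Kc: "compact_op (\<lambda>x. vsub (vsub (Q x) (P x)) (Cs (C x)))"
    using c unfolding calkin_le_def by blast
  define K where "K = (\<lambda>x. vsub (vsub (Q x) (P x)) (Cs (C x)))"
  have Kb: "bounded_op K" unfolding K_def
    by (rule bounded_diff[OF bounded_diff[OF op_bounded[OF Q] op_bounded[OF P]] bounded_compose[OF C(2) C(1)]])
  have Kpc: "pcM K" using Kc compact_iff_pc[OF Kb] unfolding K_def by simp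
  have Klin: "lin K" by (rule bounded_lin[OF Kb])
  have key: "nsq (cp Q y) \<le> l2norm y * l2norm (K y)" if y: "y \<in> ell2" "P y = y" for y
  proof -
    have Qy: "Q y \<in> ell2" by (rule op_in[OF Q y(1)])
    have Cy: "C y \<in> ell2" by (rule bounded_in[OF C(1) y(1)])
    have CCy: "Cs (C y) \<in> ell2" by (rule bounded_in[OF C(2) Cy])
    have "l2inner y (K y) = l2inner y (vsub (Q y) (P y)) - l2inner y (Cs (C y))"
      unfolding K_def by (rule inner_sub_right[OF y(1) ell2_sub[OF Qy op_in[OF P y(1)]] CCy])
    also have "l2inner y (vsub (Q y) (P y)) = l2inner y (Q y) - l2inner y y"
      using inner_sub_right[OF y(1) Qy op_in[OF P y(1)]] y(2) by simp
    also have "l2inner y (Cs (C y)) = l2inner (C y) (C y)"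
      using C(3) y(1) Cy unfolding adjoint_of_def by simp
    also have "l2inner y (Q y) = l2inner (Q y) (Q y)"
      using op_sa[OF Q y(1) Qy] op_idem[OF Q y(1)] by simp
    finally have "l2inner y (K y) = complex_of_real (nsq (Q y) - nsq y - nsq (C y))"
      by (simp add: l2inner_self Qy y(1) Cy)
    also have "nsq y = nsq (Q y) + nsq (cp Q y)" unfolding cp_def by (rule op_pyth[OF Q y(1)])
    finally have "l2inner y (K y) = complex_of_real (- (nsq (cp Q y) + nsq (C y)))" by simp
    hence "cmod (l2inner y (K y)) = \<bar>- (nsq (cp Q y) + nsq (C y))\<bar>" by (simp only: norm_of_real)
    hence "cmod (l2inner y (K y)) = nsq (cp Q y) + nsq (C y)"
      using nsq_nonneg[OF cp_in[OF Q y(1)]] nsq_nonneg[OF Cy] by linarith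
    moreover have "cmod (l2inner y (K y)) \<le> l2norm y * l2norm (K y)"
      by (rule cauchy_schwarz[OF y(1) bounded_in[OF Kb y(1)]])
    ultimately show ?thesis using nsq_nonneg[OF Cy] by linarith
  qed
  show ?thesis unfolding pcM_def
  proof (intro allI impI)
    fix xs :: "nat \<Rightarrow> vec" and M assume xs: "\<forall>k. xs k \<in> ell2 \<and> l2norm (xs k) \<le> M"
    define M' where "M' = max M 0"
    define ys where "ys k = P (xs k)" for k
    have ys: "\<forall>k. ys k \<in> ell2 \<and> l2norm (ys k) \<le> M'"
    proof
      fix k
      have "l2norm (ys k) \<le> l2norm (xs k)" unfolding ys_def using op_norm_le[OF P] xs by blast
      moreover have "l2norm (xs k) \<le> M'" using xs unfolding M'_def by (meson max.coboundedI1)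
      moreover have "ys k \<in> ell2" unfolding ys_def using op_in[OF P] xs by blast
      ultimately show "ys k \<in> ell2 \<and> l2norm (ys k) \<le> M'" by linarith
    qed
    have ysl: "\<And>k. ys k \<in> ell2" and ysn: "\<And>k. l2norm (ys k) \<le> M'" using ys by auto
    have Pys: "\<And>k. P (ys k) = ys k" unfolding ys_def using op_idem[OF P] xs by blast
    obtain r where r: "strict_mono r" "lcauchy (\<lambda>k. K (ys (r k)))" using pcM_D[OF Kpc ys] by blast
    have "lcauchy (\<lambda>k. cp Q (ys (r k)))"
    proof (rule lcauchy_dom[OF _ r(2)])
      show "\<forall>k. cp Q (ys (r k)) \<in> ell2" using cp_in[OF Q ysl] by blast
      show "0 \<le> 2 * M'" unfolding M'_def by simp
      show "\<forall>i j. nsq (vsub (cp Q (ys (r i))) (cp Q (ys (r j)))) \<le> (2 * M') * l2norm (vsub (K (ys (r i))) (K (ys (r j))))"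
      proof (intro allI)
        fix i j
        define y where "y = vsub (ys (r i)) (ys (r j))"
        have yl: "y \<in> ell2" unfolding y_def by (rule ell2_sub[OF ysl ysl])
        have Py: "P y = y" unfolding y_def using lin_sub[OF op_lin[OF P] ysl ysl] Pys by simp
        have e1: "cp Q y = vsub (cp Q (ys (r i))) (cp Q (ys (r j)))"
          unfolding y_def by (rule lin_sub[OF cp_lin[OF Q] ysl ysl])
        have e2: "K y = vsub (K (ys (r i))) (K (ys (r j)))"
          unfolding y_def by (rule lin_sub[OF Klin ysl ysl])
        have yn: "l2norm y \<le> 2 * M'"
          using l2norm_sub_le[OF ysl ysl, of "r i" "r j"] ysn[of "r i"] ysn[of "r j"] unfolding y_def by linarith
        have "nsq (cp Q y) \<le> l2norm y * l2norm (K y)" by (rule key[OF yl Py])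
        also have "\<dots> \<le> (2 * M') * l2norm (K y)"
          by (rule mult_right_mono[OF yn l2norm_nonneg[OF bounded_in[OF Kb yl]]])
        finally show "nsq (vsub (cp Q (ys (r i))) (cp Q (ys (r j)))) \<le> (2 * M') * l2norm (vsub (K (ys (r i))) (K (ys (r j))))"
          using e1 e2 by simp
      qed
    qed
    thus "\<exists>r. strict_mono r \<and> lcauchy (\<lambda>k. cp Q (P (xs (r k))))" using r(1) unfolding ys_def by blast
  qed
qed

primrec useq :: "(vec set \<Rightarrow> vec) \<Rightarrow> (vec \<Rightarrow> vec) \<Rightarrow> nat \<Rightarrow> vec list" where
  "useq nx h 0 = []"
| "useq nx h (Suc n) = useq nx h n @ [nx (h ` set (useq nx h n))]"

lemma useq_map: "useq nx h n = map (\<lambda>i. nx (h ` set (useq nx h i))) [0..<n]"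
  by (induction n) simp_all

lemma ess_from_pc: assumes P: "orth_proj P" and Q: "orth_proj Q" and pc: "pcM (\<lambda>x. cp Q (P x))"
  shows "ess_contained (P ` ell2) (Q ` ell2)"
proof (rule ccontr)
  assume "\<not> ess_contained (P ` ell2) (Q ` ell2)"
  then obtain \<epsilon> :: real where eps: "\<epsilon> > 0" and
    bad: "\<And>E0. closed_subspace E0 \<Longrightarrow> E0 \<subseteq> P ` ell2 \<Longrightarrow> fin_codim_in E0 (P ` ell2) \<Longrightarrow>
           \<exists>v\<in>E0. l2norm v = 1 \<and> \<not> l2dist v (Q ` ell2) \<le> \<epsilon>"
    unfolding ess_contained_def by blast
  have ranl: "\<And>v. v \<in> P ` ell2 \<Longrightarrow> v \<in> ell2" and ranP: "\<And>v. v \<in> P ` ell2 \<Longrightarrow> P v = v"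
    using op_ran[OF P] by blast+
  define good where "good S v \<longleftrightarrow> v \<in> P ` ell2 \<and> (\<forall>t\<in>S. l2inner t v = 0) \<and> l2norm v = 1 \<and> \<epsilon> < l2norm (cp Q v)" for S v
  have ex: "\<exists>v. good S v" if S: "finite S" "S \<subseteq> P ` ell2" for S
  proof -
    note EP = Eorth_props[OF P S]
    obtain v where v: "v \<in> Eorth P S" "l2norm v = 1" "\<not> l2dist v (Q ` ell2) \<le> \<epsilon>"
      using bad[OF conjunct1[OF EP] conjunct1[OF conjunct2[OF EP]] conjunct2[OF conjunct2[OF EP]]] by blast
    have vr: "v \<in> P ` ell2" "\<forall>t\<in>S. l2inner t v = 0" using v(1) unfolding Eorth_def by auto
    have "l2dist v (Q ` ell2) = l2norm (cp Q v)" by (rule l2dist_eq[OF Q ranl[OF vr(1)]])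
    thus ?thesis unfolding good_def using v vr by auto
  qed
  define nxt where "nxt S = (SOME v. good S v)" for S
  define h where "h u = P (cp Q u)" for u
  have hr: "h u \<in> P ` ell2" if "u \<in> P ` ell2" for u
    unfolding h_def using cp_in[OF Q ranl[OF that]] by blast
  have sr: "set (useq nxt h n) \<subseteq> P ` ell2" for n
  proof (induction n)
    case 0 thus ?case by simp
  next
    case (Suc n)
    have "finite (h ` set (useq nxt h n))" by simp
    moreover have "h ` set (useq nxt h n) \<subseteq> P ` ell2" using Suc hr by blast
    ultimately have "good (h ` set (useq nxt h n)) (nxt (h ` set (useq nxt h n)))"
      unfolding nxt_def using ex by (metis someI_ex)
    hence "nxt (h ` set (useq nxt h n)) \<in> P ` ell2" unfolding good_def by blast
    thus ?case using Suc by simp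
  qed
  define u where "u k = nxt (h ` set (useq nxt h k))" for k
  have gu: "good (h ` set (useq nxt h k)) (u k)" for k
  proof -
    have "finite (h ` set (useq nxt h k))" by simp
    moreover have "h ` set (useq nxt h k) \<subseteq> P ` ell2" using sr hr by blast
    ultimately show ?thesis unfolding u_def nxt_def using ex by (metis someI_ex)
  qed
  have uset: "set (useq nxt h k) = u ` {0..<k}" for k
    unfolding u_def by (subst useq_map) simp
  have ur: "\<And>k. u k \<in> P ` ell2" and un: "\<And>k. l2norm (u k) = 1" and ucp: "\<And>k. \<epsilon> < l2norm (cp Q (u k))"
    using gu unfolding good_def by blast+
  have ul: "\<And>k. u k \<in> ell2" using ranl ur by blast
  have orth: "l2inner (cp Q (u i)) (cp Q (u k)) = 0" if ik: "i < k" for i k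
  proof -
    have "h (u i) \<in> h ` set (useq nxt h k)" using ik uset by auto
    hence "l2inner (h (u i)) (u k) = 0" using gu[of k] unfolding good_def by blast
    moreover have "l2inner (h (u i)) (u k) = l2inner (cp Q (u i)) (u k)"
      unfolding h_def using op_sa[OF P cp_in[OF Q ul] ul] ranP[OF ur] by simp
    moreover have "l2inner (cp Q (u i)) (cp Q (u k)) = l2inner (cp Q (u i)) (u k)"
      using op_sa[OF cp_orth_proj[OF Q] cp_in[OF Q ul] ul, of i k] op_idem[OF cp_orth_proj[OF Q] ul] by simp
    ultimately show ?thesis by simp
  qed
  have far: "\<epsilon>\<^sup>2 < nsq (vsub (cp Q (u k)) (cp Q (u i)))" if ik: "i < k" for i k
  proof -
    have ci: "cp Q (u i) \<in> ell2" and ck: "cp Q (u k) \<in> ell2" using cp_in[OF Q ul] by auto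
    have "l2inner (cp Q (u k)) (cp Q (u i)) = cnj (l2inner (cp Q (u i)) (cp Q (u k)))"
      by (rule inner_commute[OF ci ck])
    hence z: "l2inner (cp Q (u k)) (cp Q (u i)) = 0" using orth[OF ik] by simp
    have "nsq (vsub (cp Q (u k)) (cp Q (u i))) = nsq (cp Q (u k)) + nsq (cp Q (u i))"
      using nsq_sub[OF ck ci] z by simp
    moreover have "\<epsilon>\<^sup>2 < nsq (cp Q (u k))"
      using ucp[of k] eps l2norm_sq[OF ck] by (metis power_strict_mono less_imp_le zero_less_numeral)
    moreover have "0 \<le> nsq (cp Q (u i))" by (rule nsq_nonneg[OF ci])
    ultimately show ?thesis by linarith
  qed
  have "\<forall>k. u k \<in> ell2 \<and> l2norm (u k) \<le> 1" using ul un by simp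
  from pcM_D[OF pc this] obtain r where r: "strict_mono r" "lcauchy (\<lambda>k. cp Q (P (u (r k))))" by blast
  then obtain N where N: "\<forall>m\<ge>N. \<forall>n\<ge>N. l2norm (vsub (cp Q (P (u (r m)))) (cp Q (P (u (r n))))) < \<epsilon>"
    using eps unfolding lcauchy_def by blast
  have lt: "l2norm (vsub (cp Q (u (r (Suc N)))) (cp Q (u (r N)))) < \<epsilon>" using N ranP[OF ur] by fastforce
  have "r N < r (Suc N)" using r(1) by (simp add: strict_mono_def)
  hence "\<epsilon>\<^sup>2 < nsq (vsub (cp Q (u (r (Suc N)))) (cp Q (u (r N))))" by (rule far)
  moreover have "nsq (vsub (cp Q (u (r (Suc N)))) (cp Q (u (r N)))) < \<epsilon>\<^sup>2"
  proof -
    have dl: "vsub (cp Q (u (r (Suc N)))) (cp Q (u (r N))) \<in> ell2" using cp_in[OF Q ul] ell2_sub by blast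
    have "(l2norm (vsub (cp Q (u (r (Suc N)))) (cp Q (u (r N)))))\<^sup>2 < \<epsilon>\<^sup>2"
      using lt l2norm_nonneg[OF dl] by (simp add: power_strict_mono)
    thus ?thesis using l2norm_sq[OF dl] by simp
  qed
  ultimately show False by linarith
qed

definition pf :: "vec set \<Rightarrow> vec \<Rightarrow> vec" where
  "pf E x = (SOME p. p \<in> E \<and> (\<forall>e\<in>E. l2inner e (vsub x p) = 0))"

lemma pf_prop: assumes E: "closed_subspace E" and x: "x \<in> ell2"
  shows "pf E x \<in> E \<and> (\<forall>e\<in>E. l2inner e (vsub x (pf E x)) = 0)"
proof -
  have "\<exists>p. p \<in> E \<and> (\<forall>e\<in>E. l2inner e (vsub x p) = 0)" using proj_exists[OF E x] by blast
  thus ?thesis unfolding pf_def by (rule someI_ex)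
qed

lemma pf_unique: assumes E: "closed_subspace E" and x: "x \<in> ell2" and p: "p \<in> E" "\<forall>e\<in>E. l2inner e (vsub x p) = 0"
  shows "pf E x = p"
proof -
  define q where "q = pf E x"
  have q: "q \<in> E" "\<forall>e\<in>E. l2inner e (vsub x q) = 0" using pf_prop[OF E x] unfolding q_def by auto
  have El: "\<And>e. e \<in> E \<Longrightarrow> e \<in> ell2" using cs_sub_ell2[OF E] .
  define d where "d = vsub q p"
  have dE: "d \<in> E" unfolding d_def
    using cs_comb[OF E q(1) p(1), of 1 "-1"] by (simp add: vadd_def vscale_def vsub_def)
  have dl: "d \<in> ell2" by (rule El[OF dE])
  have "d = vsub (vsub x p) (vsub x q)" unfolding d_def by (simp add: vsub_def fun_eq_iff)
  hence "l2inner d d = l2inner d (vsub x p) - l2inner d (vsub x q)"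
    using inner_sub_right[OF dl ell2_sub[OF x El[OF p(1)]] ell2_sub[OF x El[OF q(1)]]] by simp
  also have "\<dots> = 0" using p(2) q(2) dE by simp
  finally have "nsq d = 0" using l2inner_self[OF dl] by simp
  hence "d = (\<lambda>n. 0)" using nsq_zero_iff[OF dl] by simp
  thus ?thesis unfolding d_def q_def by (simp add: vsub_def fun_eq_iff)
qed

lemma pf_fix: "closed_subspace E \<Longrightarrow> e \<in> E \<Longrightarrow> pf E e = e"
  by (rule pf_unique) (auto simp: cs_sub_ell2 inner_zero_right)

lemma pf_lin: assumes E: "closed_subspace E" shows "lin (\<lambda>x. vsub x (pf E x))"
proof -
  have El: "\<And>e. e \<in> E \<Longrightarrow> e \<in> ell2" using cs_sub_ell2[OF E] .
  have pfl: "lin (pf E)" unfolding lin_def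
  proof (intro conjI ballI allI)
    show "pf E x \<in> ell2" if "x \<in> ell2" for x using pf_prop[OF E that] El by blast
    fix x y a b assume x: "x \<in> ell2" and y: "y \<in> ell2"
    have px: "pf E x \<in> E" "\<forall>e\<in>E. l2inner e (vsub x (pf E x)) = 0" using pf_prop[OF E x] by auto
    have py: "pf E y \<in> E" "\<forall>e\<in>E. l2inner e (vsub y (pf E y)) = 0" using pf_prop[OF E y] by auto
    have combl: "vadd (vscale a x) (vscale b y) \<in> ell2" using x y by (simp add: ell2_add ell2_scale)
    show "pf E (vadd (vscale a x) (vscale b y)) = vadd (vscale a (pf E x)) (vscale b (pf E y))"
    proof (rule pf_unique[OF E combl cs_comb[OF E px(1) py(1)]], rule ballI)
      fix e assume e: "e \<in> E"
      have el: "e \<in> ell2" by (rule El[OF e])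
      have eq: "vsub (vadd (vscale a x) (vscale b y)) (vadd (vscale a (pf E x)) (vscale b (pf E y)))
          = vadd (vscale a (vsub x (pf E x))) (vscale b (vsub y (pf E y)))"
        by (simp add: vadd_def vsub_def vscale_def fun_eq_iff algebra_simps)
      have "l2inner e (vadd (vscale a (vsub x (pf E x))) (vscale b (vsub y (pf E y))))
          = a * l2inner e (vsub x (pf E x)) + b * l2inner e (vsub y (pf E y))"
        using inner_add_right[OF el ell2_scale[OF ell2_sub[OF x El[OF px(1)]]] ell2_scale[OF ell2_sub[OF y El[OF py(1)]]]]
          inner_scale_right[OF el ell2_sub[OF x El[OF px(1)]]] inner_scale_right[OF el ell2_sub[OF y El[OF py(1)]]]
        by simp
      thus "l2inner e (vsub (vadd (vscale a x) (vscale b y)) (vadd (vscale a (pf E x)) (vscale b (pf E y)))) = 0"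
        unfolding eq using px(2) py(2) e by simp
    qed
  qed
  show ?thesis by (rule lin_diff[OF lin_id pfl])
qed

lemma pf_norms: assumes E: "closed_subspace E" and x: "x \<in> ell2"
  shows "l2norm (pf E x) \<le> l2norm x" "l2norm (vsub x (pf E x)) \<le> l2norm x"
proof -
  have p: "pf E x \<in> E" "\<forall>e\<in>E. l2inner e (vsub x (pf E x)) = 0" using pf_prop[OF E x] by auto
  have pl: "pf E x \<in> ell2" using cs_sub_ell2[OF E p(1)] .
  have rl: "vsub x (pf E x) \<in> ell2" by (rule ell2_sub[OF x pl])
  have "nsq (vadd (pf E x) (vsub x (pf E x))) = nsq (pf E x) + nsq (vsub x (pf E x))"
    using pythag[OF pl rl] p by simp
  hence eq: "nsq x = nsq (pf E x) + nsq (vsub x (pf E x))" by (simp add: vadd_vsub_cancel)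
  show "l2norm (pf E x) \<le> l2norm x" using eq nsq_nonneg[OF rl] by (simp add: l2norm_nsq)
  show "l2norm (vsub x (pf E x)) \<le> l2norm x" using eq nsq_nonneg[OF pl] by (simp add: l2norm_nsq)
qed

lemma approx: fixes xs :: "nat \<Rightarrow> vec" assumes P: "orth_proj P" and Q: "orth_proj Q" and ess: "ess_contained (P ` ell2) (Q ` ell2)"
  and eps: "\<epsilon> > 0" and xs: "\<forall>k. xs k \<in> ell2 \<and> l2norm (xs k) \<le> 1"
  shows "\<exists>r::nat\<Rightarrow>nat. strict_mono r \<and> (\<exists>N. \<forall>i\<ge>N. \<forall>j\<ge>N. l2norm (vsub (cp Q (P (xs (r i)))) (cp Q (P (xs (r j))))) \<le> 3 * \<epsilon>)"
proof -
  obtain E0 where E0: "closed_subspace E0" "E0 \<subseteq> P ` ell2" "fin_codim_in E0 (P ` ell2)"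
    and sm1: "\<forall>v\<in>E0. l2norm v = 1 \<longrightarrow> l2dist v (Q ` ell2) \<le> \<epsilon>"
    using ess eps unfolding ess_contained_def by blast
  obtain S where S: "finite S" "S \<subseteq> P ` ell2" and dec: "P ` ell2 = {vadd x y |x y. x \<in> E0 \<and> y \<in> lspan S}"
    using E0(3) unfolding fin_codim_in_def by blast
  have ranl: "\<And>v. v \<in> P ` ell2 \<Longrightarrow> v \<in> ell2" using op_ran[OF P] by blast
  have El: "\<And>e. e \<in> E0 \<Longrightarrow> e \<in> ell2" using cs_sub_ell2[OF E0(1)] .
  have Sl: "S \<subseteq> ell2" using S(2) ranl by blast
  have small: "l2norm (cp Q v) \<le> \<epsilon> * l2norm v" if v: "v \<in> E0" for v
  proof (cases "nsq v = 0")
    case True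
    hence "v = (\<lambda>n. 0)" using nsq_zero_iff[OF El[OF v]] by simp
    thus ?thesis using lin_zero[OF cp_lin[OF Q]] by simp
  next
    case False
    define n where "n = l2norm v"
    have n: "n > 0" unfolding n_def l2norm_nsq using False nsq_nonneg[OF El[OF v]] by simp
    define v' where "v' = vscale (complex_of_real (1 / n)) v"
    have v'E: "v' \<in> E0" unfolding v'_def by (rule cs_scale[OF E0(1) v])
    have "l2norm v' = 1" unfolding v'_def n_def using n l2norm_scale[OF El[OF v]] by (simp add: n_def norm_divide)
    hence "l2dist v' (Q ` ell2) \<le> \<epsilon>" using sm1 v'E by blast
    hence "l2norm (cp Q v') \<le> \<epsilon>" using l2dist_eq[OF Q El[OF v'E]] by simp
    moreover have "cp Q v' = vscale (complex_of_real (1 / n)) (cp Q v)"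
      unfolding v'_def by (rule lin_scale[OF cp_lin[OF Q] El[OF v]])
    ultimately have "(1 / n) * l2norm (cp Q v) \<le> \<epsilon>"
      using l2norm_scale[OF cp_in[OF Q El[OF v]]] n by (simp add: norm_divide)
    thus ?thesis using n unfolding n_def[symmetric] by (simp add: field_simps)
  qed
  define ys where "ys k = P (xs k)" for k
  have ysr: "\<And>k. ys k \<in> P ` ell2" unfolding ys_def using xs by blast
  have ysl: "\<And>k. ys k \<in> ell2" using ysr ranl by blast
  have ysn: "\<And>k. l2norm (ys k) \<le> 1" unfolding ys_def using op_norm_le[OF P] xs by (meson order_trans)
  have "\<forall>k. \<exists>p. fst p \<in> E0 \<and> snd p \<in> lspan S \<and> ys k = vadd (fst p) (snd p)"
    using ysr dec by fastforce
  hence "\<exists>g. \<forall>k. fst (g k) \<in> E0 \<and> snd (g k) \<in> lspan S \<and> ys k = vadd (fst (g k)) (snd (g k))" by (rule choice)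
  then obtain g where g: "\<And>k. fst (g k) \<in> E0" "\<And>k. snd (g k) \<in> lspan S" "\<And>k. ys k = vadd (fst (g k)) (snd (g k))"
    by blast
  define e where "e k = fst (g k)" for k
  define f where "f k = snd (g k)" for k
  have ef: "\<And>k. e k \<in> E0" "\<And>k. f k \<in> lspan S" "\<And>k. ys k = vadd (e k) (f k)" using g unfolding e_def f_def by auto
  have fl: "\<And>k. f k \<in> ell2" using lspan_ell2[OF S(1) Sl] ef(2) by blast
  define Lc where "Lc x = vsub x (pf E0 x)" for x
  have Lclin: "lin Lc" unfolding Lc_def[abs_def] by (rule pf_lin[OF E0(1)])
  have Lce: "Lc (e k) = (\<lambda>n. 0)" for k unfolding Lc_def using pf_fix[OF E0(1) ef(1)] by simp
  have Lcys: "Lc (ys k) = Lc (f k)" for k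
    using lin_add[OF Lclin El[OF ef(1)] fl, of k k] Lce ef(3) by (simp add: vadd_def)
  have bnd: "\<forall>k. l2norm (Lc (f k)) \<le> 1"
  proof
    fix k
    have "l2norm (Lc (ys k)) \<le> l2norm (ys k)" unfolding Lc_def by (rule pf_norms(2)[OF E0(1) ysl])
    thus "l2norm (Lc (f k)) \<le> 1" using ysn[of k] Lcys by simp
  qed
  have fS: "\<forall>k. f k \<in> lspan S" using ef(2) by blast
  obtain r where r: "strict_mono r" "lcauchy (\<lambda>k. Lc (f (r k)))"
    using fd_cauchy[OF S(1) Sl Lclin fS bnd] by (elim exE conjE)
  then obtain N where N: "\<forall>m\<ge>N. \<forall>n\<ge>N. l2norm (vsub (Lc (f (r m))) (Lc (f (r n)))) < \<epsilon>"
    using eps unfolding lcauchy_def by blast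
  have "\<forall>i\<ge>N. \<forall>j\<ge>N. l2norm (vsub (cp Q (P (xs (r i)))) (cp Q (P (xs (r j))))) \<le> 3 * \<epsilon>"
  proof (intro allI impI)
    fix i j assume ij: "N \<le> i" "N \<le> j"
    define a where "a k = Lc (ys k)" for k
    define b where "b k = pf E0 (ys k)" for k
    have bE: "\<And>k. b k \<in> E0" unfolding b_def using pf_prop[OF E0(1) ysl] by blast
    have bl: "\<And>k. b k \<in> ell2" using El bE by blast
    have al: "\<And>k. a k \<in> ell2" unfolding a_def Lc_def using ysl bl b_def ell2_sub by simp
    have bn: "\<And>k. l2norm (b k) \<le> 1" unfolding b_def using pf_norms(1)[OF E0(1) ysl] ysn order_trans by blast
    have ysab: "ys k = vadd (b k) (a k)" for k unfolding a_def b_def Lc_def by (simp add: vadd_vsub_cancel)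
    have cpl: "lin (cp Q)" by (rule cp_lin[OF Q])
    have "vsub (cp Q (ys (r i))) (cp Q (ys (r j))) = vadd (cp Q (vsub (a (r i)) (a (r j)))) (cp Q (vsub (b (r i)) (b (r j))))"
    proof -
      have f1: "cp Q (ys (r i)) = vadd (cp Q (b (r i))) (cp Q (a (r i)))"
        unfolding ysab[of "r i"] by (rule lin_add[OF cpl bl al])
      have f2: "cp Q (ys (r j)) = vadd (cp Q (b (r j))) (cp Q (a (r j)))"
        unfolding ysab[of "r j"] by (rule lin_add[OF cpl bl al])
      have f3: "cp Q (vsub (a (r i)) (a (r j))) = vsub (cp Q (a (r i))) (cp Q (a (r j)))" by (rule lin_sub[OF cpl al al])
      have f4: "cp Q (vsub (b (r i)) (b (r j))) = vsub (cp Q (b (r i))) (cp Q (b (r j)))" by (rule lin_sub[OF cpl bl bl])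
      show ?thesis unfolding f1 f2 f3 f4 by (simp add: vadd_def vsub_def fun_eq_iff algebra_simps)
    qed
    hence "l2norm (vsub (cp Q (ys (r i))) (cp Q (ys (r j)))) \<le> l2norm (cp Q (vsub (a (r i)) (a (r j)))) + l2norm (cp Q (vsub (b (r i)) (b (r j))))"
      using triangle[OF cp_in[OF Q ell2_sub[OF al al]] cp_in[OF Q ell2_sub[OF bl bl]]] by simp
    also have "l2norm (cp Q (vsub (a (r i)) (a (r j)))) \<le> l2norm (vsub (a (r i)) (a (r j)))"
      unfolding cp_def by (rule op_norm_le2[OF Q ell2_sub[OF al al]])
    also have "l2norm (vsub (a (r i)) (a (r j))) < \<epsilon>" using N ij Lcys unfolding a_def by simp
    also have "l2norm (cp Q (vsub (b (r i)) (b (r j)))) \<le> \<epsilon> * l2norm (vsub (b (r i)) (b (r j)))"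
    proof (rule small)
      show "vsub (b (r i)) (b (r j)) \<in> E0"
        using cs_comb[OF E0(1) bE bE, of 1 "r i" "-1" "r j"] by (simp add: vadd_def vscale_def vsub_def)
    qed
    also have "\<epsilon> * l2norm (vsub (b (r i)) (b (r j))) \<le> \<epsilon> * 2"
    proof -
      have "l2norm (vsub (b (r i)) (b (r j))) \<le> 2" using l2norm_sub_le[OF bl bl, of "r i" "r j"] bn[of "r i"] bn[of "r j"] by linarith
      thus ?thesis using eps by (intro mult_left_mono) auto
    qed
    finally show "l2norm (vsub (cp Q (P (xs (r i)))) (cp Q (P (xs (r j))))) \<le> 3 * \<epsilon>" unfolding ys_def by simp
  qed
  note fin = this
  show ?thesis by (rule exI[where x=r], rule conjI[OF r(1)], rule exI[where x=N], rule fin)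
qed

lemma pc1_from_approx:
  assumes L: "lin T"
    and ap: "\<And>\<epsilon> (xs::nat \<Rightarrow> vec). \<epsilon> > 0 \<Longrightarrow> \<forall>k. xs k \<in> ell2 \<and> l2norm (xs k) \<le> 1 \<Longrightarrow>
      \<exists>r::nat\<Rightarrow>nat. strict_mono r \<and> (\<exists>N. \<forall>i\<ge>N. \<forall>j\<ge>N. l2norm (vsub (T (xs (r i))) (T (xs (r j)))) \<le> 3 * \<epsilon>)"
  shows "pc1 T"
  unfolding pc1_def
proof (intro allI impI)
  fix xs :: "nat \<Rightarrow> vec" assume xs: "\<forall>k. xs k \<in> ell2 \<and> l2norm (xs k) \<le> 1"
  define Pr where "Pr n s \<longleftrightarrow> (\<exists>N. \<forall>i\<ge>N. \<forall>j\<ge>N. l2norm (vsub (T (xs (s i))) (T (xs (s j)))) \<le> 3 * inverse (real (Suc n)))"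
    for n and s :: "nat \<Rightarrow> nat"
  interpret D: subseqs Pr
  proof unfold_locales
    fix n and s :: "nat \<Rightarrow> nat" assume s: "strict_mono s"
    have "\<forall>k. (xs \<circ> s) k \<in> ell2 \<and> l2norm ((xs \<circ> s) k) \<le> 1" using xs by simp
    from ap[OF _ this, of "inverse (real (Suc n))"] obtain r' :: "nat \<Rightarrow> nat" and N where
      r': "strict_mono r'" "\<forall>i\<ge>N. \<forall>j\<ge>N. l2norm (vsub (T ((xs \<circ> s) (r' i))) (T ((xs \<circ> s) (r' j)))) \<le> 3 * inverse (real (Suc n))"
      by auto
    have "Pr n (s \<circ> r')" unfolding Pr_def using r'(2) by auto
    thus "\<exists>r'. strict_mono r' \<and> Pr n (s \<circ> r')" using r'(1) by blast
  qed
  have stable: "Pr n (s \<circ> r)" if r: "strict_mono r" and ps: "Pr n s" for r s n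
  proof -
    obtain N where N: "\<forall>i\<ge>N. \<forall>j\<ge>N. l2norm (vsub (T (xs (s i))) (T (xs (s j)))) \<le> 3 * inverse (real (Suc n))"
      using ps unfolding Pr_def by blast
    have "\<forall>i\<ge>N. \<forall>j\<ge>N. l2norm (vsub (T (xs ((s \<circ> r) i))) (T (xs ((s \<circ> r) j)))) \<le> 3 * inverse (real (Suc n))"
    proof (intro allI impI)
      fix i j assume "N \<le> i" "N \<le> j"
      hence "N \<le> r i" "N \<le> r j" using seq_suble[OF r] le_trans by blast+
      thus "l2norm (vsub (T (xs ((s \<circ> r) i))) (T (xs ((s \<circ> r) j)))) \<le> 3 * inverse (real (Suc n))" using N by simp
    qed
    thus ?thesis unfolding Pr_def by blast
  qed
  have hold: "Pr k (D.diagseq \<circ> (+) (Suc k))" for k by (rule D.diagseq_holds) (rule stable)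
  have "lcauchy (\<lambda>k. T (xs (D.diagseq k)))" unfolding lcauchy_def
  proof (intro conjI allI impI)
    show "T (xs (D.diagseq k)) \<in> ell2" for k using lin_in[OF L] xs by blast
    fix e :: real assume e: "e > 0"
    obtain k where k: "inverse (real (Suc k)) < e / 3" using reals_Archimedean[of "e/3"] e by auto
    obtain N where N: "\<forall>i\<ge>N. \<forall>j\<ge>N. l2norm (vsub (T (xs ((D.diagseq \<circ> (+) (Suc k)) i))) (T (xs ((D.diagseq \<circ> (+) (Suc k)) j)))) \<le> 3 * inverse (real (Suc k))"
      using hold[of k] unfolding Pr_def by blast
    show "\<exists>N. \<forall>m\<ge>N. \<forall>n\<ge>N. l2norm (vsub (T (xs (D.diagseq m))) (T (xs (D.diagseq n)))) < e"
    proof (intro exI[of _ "N + Suc k"] allI impI)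
      fix m n assume mn: "N + Suc k \<le> m" "N + Suc k \<le> n"
      have "l2norm (vsub (T (xs ((D.diagseq \<circ> (+) (Suc k)) (m - Suc k)))) (T (xs ((D.diagseq \<circ> (+) (Suc k)) (n - Suc k))))) \<le> 3 * inverse (real (Suc k))"
      proof -
        have i: "N \<le> m - Suc k" and j: "N \<le> n - Suc k" using mn by auto
        show ?thesis using N i j by blast
      qed
      moreover have "(D.diagseq \<circ> (+) (Suc k)) (m - Suc k) = D.diagseq m" "(D.diagseq \<circ> (+) (Suc k)) (n - Suc k) = D.diagseq n"
        using mn by auto
      ultimately have "l2norm (vsub (T (xs (D.diagseq m))) (T (xs (D.diagseq n)))) \<le> 3 * inverse (real (Suc k))"
        by simp
      also have "\<dots> < e" using k by simp
      finally show "l2norm (vsub (T (xs (D.diagseq m))) (T (xs (D.diagseq n)))) < e" .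
    qed
  qed
  thus "\<exists>r. strict_mono r \<and> lcauchy (\<lambda>k. T (xs (r k)))" using D.subseq_diagseq by blast
qed

lemma pcM_adjoint: assumes Tpc: "pcM T" and Tl: "lin T" and Sb: "bounded_op S"
  and adj: "\<forall>x\<in>ell2. \<forall>y\<in>ell2. l2inner (T x) y = l2inner x (S y)"
  shows "pcM S"
  unfolding pcM_def
proof (intro allI impI)
  fix xs :: "nat \<Rightarrow> vec" and M assume xs: "\<forall>k. xs k \<in> ell2 \<and> l2norm (xs k) \<le> M"
  define M' where "M' = max M 0"
  have xsl: "\<And>k. xs k \<in> ell2" and xsn: "\<And>k. l2norm (xs k) \<le> M'" using xs unfolding M'_def by (auto intro: max.coboundedI1)
  have TS: "pcM (\<lambda>x. T (S x))" by (rule pcM_compose_bounded[OF Tpc Sb])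
  obtain r where r: "strict_mono r" "lcauchy (\<lambda>k. T (S (xs (r k))))" using pcM_D[OF TS xs] by blast
  have Sl: "lin S" by (rule bounded_lin[OF Sb])
  have "lcauchy (\<lambda>k. S (xs (r k)))"
  proof (rule lcauchy_dom[OF _ r(2)])
    show "\<forall>k. S (xs (r k)) \<in> ell2" using bounded_in[OF Sb xsl] by blast
    show "0 \<le> 2 * M'" unfolding M'_def by simp
    show "\<forall>i j. nsq (vsub (S (xs (r i))) (S (xs (r j)))) \<le> 2 * M' * l2norm (vsub (T (S (xs (r i)))) (T (S (xs (r j)))))"
    proof (intro allI)
      fix i j
      define z where "z = vsub (xs (r i)) (xs (r j))"
      have zl: "z \<in> ell2" unfolding z_def by (rule ell2_sub[OF xsl xsl])
      have Szl: "S z \<in> ell2" by (rule bounded_in[OF Sb zl])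
      have e1: "S z = vsub (S (xs (r i))) (S (xs (r j)))" unfolding z_def by (rule lin_sub[OF Sl xsl xsl])
      have e2: "T (S z) = vsub (T (S (xs (r i)))) (T (S (xs (r j))))"
        unfolding e1 by (rule lin_sub[OF Tl bounded_in[OF Sb xsl] bounded_in[OF Sb xsl]])
      have "complex_of_real (nsq (S z)) = l2inner (S z) (S z)" by (rule l2inner_self[OF Szl, symmetric])
      also have "\<dots> = l2inner (T (S z)) z" using adj Szl zl by simp
      finally have "nsq (S z) = cmod (l2inner (T (S z)) z)" using nsq_nonneg[OF Szl]
        by (metis norm_of_real abs_of_nonneg)
      also have "\<dots> \<le> l2norm (T (S z)) * l2norm z" by (rule cauchy_schwarz[OF lin_in[OF Tl Szl] zl])
      also have "\<dots> \<le> l2norm (T (S z)) * (2 * M')"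
      proof (rule mult_left_mono)
        show "l2norm z \<le> 2 * M'" using l2norm_sub_le[OF xsl xsl, of "r i" "r j"] xsn[of "r i"] xsn[of "r j"] unfolding z_def by linarith
        show "0 \<le> l2norm (T (S z))" by (rule l2norm_nonneg[OF lin_in[OF Tl Szl]])
      qed
      finally show "nsq (vsub (S (xs (r i))) (S (xs (r j)))) \<le> 2 * M' * l2norm (vsub (T (S (xs (r i)))) (T (S (xs (r j)))))"
        using e1 e2 by (simp add: mult.commute)
    qed
  qed
  thus "\<exists>r. strict_mono r \<and> lcauchy (\<lambda>k. S (xs (r k)))" using r(1) by blast
qed

lemma calkin_from_ess: assumes P: "orth_proj P" and Q: "orth_proj Q" and ess: "ess_contained (P ` ell2) (Q ` ell2)"
  shows "calkin_le P Q"
proof -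
  define T1 where "T1 x = cp Q (P x)" for x
  define T2 where "T2 x = P (cp Q x)" for x
  have T1l: "lin T1" unfolding T1_def[abs_def] by (rule lin_compose[OF cp_lin[OF Q] op_lin[OF P]])
  have T1b: "bounded_op T1" unfolding T1_def[abs_def] by (rule bounded_compose[OF op_bounded[OF cp_orth_proj[OF Q]] op_bounded[OF P]])
  have T2b: "bounded_op T2" unfolding T2_def[abs_def] by (rule bounded_compose[OF op_bounded[OF P] op_bounded[OF cp_orth_proj[OF Q]]])
  have "pc1 T1"
  proof (rule pc1_from_approx[OF T1l])
    fix \<epsilon> :: real and xs :: "nat \<Rightarrow> vec" assume "\<epsilon> > 0" "\<forall>k. xs k \<in> ell2 \<and> l2norm (xs k) \<le> 1"
    from approx[OF P Q ess this] show "\<exists>r::nat\<Rightarrow>nat. strict_mono r \<and> (\<exists>N. \<forall>i\<ge>N. \<forall>j\<ge>N. l2norm (vsub (T1 (xs (r i))) (T1 (xs (r j)))) \<le> 3 * \<epsilon>)"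
      unfolding T1_def .
  qed
  hence T1pc: "pcM T1" by (rule pc1_pcM[OF T1l])
  have adj: "\<forall>x\<in>ell2. \<forall>y\<in>ell2. l2inner (T1 x) y = l2inner x (T2 y)"
  proof (intro ballI)
    fix x y assume x: "x \<in> ell2" and y: "y \<in> ell2"
    have "l2inner (T1 x) y = l2inner (P x) (cp Q y)" unfolding T1_def by (rule op_sa[OF cp_orth_proj[OF Q] op_in[OF P x] y])
    also have "\<dots> = l2inner x (T2 y)" unfolding T2_def by (rule op_sa[OF P x cp_in[OF Q y]])
    finally show "l2inner (T1 x) y = l2inner x (T2 y)" .
  qed
  have T2pc: "pcM T2" by (rule pcM_adjoint[OF T1pc T1l T2b adj])
  define C where "C x = vsub (Q x) (P x)" for x
  have Cb: "bounded_op C" unfolding C_def[abs_def] by (rule bounded_diff[OF op_bounded[OF Q] op_bounded[OF P]])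
  have Cadj: "adjoint_of C C" unfolding adjoint_of_def
  proof (intro ballI)
    fix x y assume x: "x \<in> ell2" and y: "y \<in> ell2"
    have "l2inner (C x) y = l2inner (Q x) y - l2inner (P x) y" unfolding C_def by (rule inner_sub_left[OF op_in[OF Q x] op_in[OF P x] y])
    also have "\<dots> = l2inner x (Q y) - l2inner x (P y)" using op_sa[OF Q x y] op_sa[OF P x y] by simp
    also have "\<dots> = l2inner x (C y)" unfolding C_def by (rule inner_sub_right[OF x op_in[OF Q y] op_in[OF P y], symmetric])
    finally show "l2inner (C x) y = l2inner x (C y)" .
  qed
  define K where "K x = vsub (vsub (Q x) (P x)) (C (C x))" for x
  have Kb: "bounded_op K" unfolding K_def[abs_def]
    by (rule bounded_diff[OF bounded_diff[OF op_bounded[OF Q] op_bounded[OF P]] bounded_compose[OF Cb Cb]])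
  have Keq: "K x = vsub (vscale (-1) (T1 x)) (T2 x)" if x: "x \<in> ell2" for x
  proof -
    have Qx: "Q x \<in> ell2" and Px: "P x \<in> ell2" using op_in[OF Q x] op_in[OF P x] .
    have a: "C (C x) = vsub (Q (C x)) (P (C x))" by (rule C_def)
    have b: "Q (C x) = vsub (Q (Q x)) (Q (P x))" unfolding C_def by (rule lin_sub[OF op_lin[OF Q] Qx Px])
    have c: "P (C x) = vsub (P (Q x)) (P (P x))" unfolding C_def by (rule lin_sub[OF op_lin[OF P] Qx Px])
    have CC: "C (C x) = vsub (vsub (Q x) (Q (P x))) (vsub (P (Q x)) (P x))"
      by (simp only: a b c op_idem[OF Q x] op_idem[OF P x])
    have T1x: "T1 x = vsub (P x) (Q (P x))" unfolding T1_def cp_def ..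
    have T2x: "T2 x = vsub (P x) (P (Q x))" unfolding T2_def cp_def by (rule lin_sub[OF op_lin[OF P] x Qx])
    have Kx: "K x = vsub (vsub (Q x) (P x)) (C (C x))" by (rule K_def)
    show ?thesis unfolding Kx CC T1x T2x by (simp add: vsub_def vscale_def fun_eq_iff algebra_simps)
  qed
  have "pcM (\<lambda>x. vsub (vscale (-1) (T1 x)) (T2 x))" by (rule pcM_diff[OF pcM_neg[OF T1pc T1l] T2pc])
  hence "pcM K" by (rule pcM_cong) (rule Keq)
  hence "compact_op K" using compact_iff_pc[OF Kb] by simp
  hence "compact_op (\<lambda>x. vsub (vsub (Q x) (P x)) (C (C x)))" unfolding K_def[abs_def] .
  thus ?thesis unfolding calkin_le_def using Cb Cadj by blast
qed

theorem proposition3p3: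
  fixes P Q :: "vec \<Rightarrow> vec"
  assumes "orth_proj P" and "orth_proj Q"
  shows "calkin_le P Q \<longleftrightarrow> ess_contained (P ` ell2) (Q ` ell2)"
proof
  assume "calkin_le P Q"
  hence "pcM (\<lambda>x. cp Q (P x))" by (rule T1_pc_from_calkin[OF assms])
  thus "ess_contained (P ` ell2) (Q ` ell2)" by (rule ess_from_pc[OF assms])
next
  assume "ess_contained (P ` ell2) (Q ` ell2)"
  thus "calkin_le P Q" by (rule calkin_from_ess[OF assms])
qed

end
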